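(* Let $S=[0,1]\times[0,1]$ and $R=[0,a]\times[0,a^{p-1}]$ for some $a\ge1$ and $1<p<2$. Let $L\ge1$ and let $f:(\partial S,\|\cdot\|_{a,p})\to(\partial R,|\cdot|)$ be an orientation preserving $L$-bilipschitz homeomorphism which maps the edges of $S$ to those of $R$. Then there exists a homeomorphism $F:S\to R$ extending $f$ such that $|DF|^p\le C(L,p)\,J_F$ almost everywhere in $S$, where $C(L,p)$ depends only on $L$ and $p$.
   Context: For $a\ge1$ and $1<p<2$, $\|\cdot\|_{a,p}:\mathbb R^2\to[0,\infty)$ is $\|(x_1,x_2)\|_{a,p}=\max\{a|x_1|,\,a^{p-1}|x_2|\}$; the domain $\partial S$ is equipped with the metric $(u,v)\mapsto\|u-v\|_{a,p}$ and $\partial R$ with the Euclidean metric. $|DF|$ is the operator norm of the differential and $J_F$ the Jacobian determinant. *)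

theory Defs
  imports "HOL-Analysis.Analysis" "HOL-Complex_Analysis.Complex_Analysis"
begin

text \<open>Points of the plane are modelled as \<open>real^2\<close>; coordinate 1 is x, coordinate 2 is y.\<close>

definition pt :: "real \<Rightarrow> real \<Rightarrow> real^2" where
  "pt x y = vector [x, y]"

definition rect :: "real \<Rightarrow> real \<Rightarrow> (real^2) set" where
  "rect w h = {z. 0 \<le> z$1 \<and> z$1 \<le> w \<and> 0 \<le> z$2 \<and> z$2 \<le> h}"

definition rect_edges :: "real \<Rightarrow> real \<Rightarrow> (real^2) set set" where
  "rect_edges w h =
     {closed_segment (pt 0 0) (pt w 0), closed_segment (pt w 0) (pt w h),
      closed_segment (pt w h) (pt 0 h), closed_segment (pt 0 h) (pt 0 0)}"

definition norm_ap :: "real \<Rightarrow> real \<Rightarrow> real^2 \<Rightarrow> real" where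
  "norm_ap a p z = max (a * \<bar>z$1\<bar>) (a powr (p - 1) * \<bar>z$2\<bar>)"

definition toC :: "real^2 \<Rightarrow> complex" where
  "toC z = Complex (z$1) (z$2)"

definition ofC :: "complex \<Rightarrow> real^2" where
  "ofC z = pt (Re z) (Im z)"

definition rect_loop :: "real \<Rightarrow> real \<Rightarrow> real \<Rightarrow> complex" where
  "rect_loop w h =
     linepath 0 (Complex w 0) +++ linepath (Complex w 0) (Complex w h) +++
     linepath (Complex w h) (Complex 0 h) +++ linepath (Complex 0 h) 0"

text \<open>A homeomorphism f from the boundary of [0,w1]x[0,h1] onto the boundary of
  [0,w2]x[0,h2] is orientation preserving iff the image of the positively oriented
  boundary loop winds once positively around (any, here the centre) interior point
  of the target rectangle.\<close>
definition bdry_orientation_preserving ::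
  "(real^2 \<Rightarrow> real^2) \<Rightarrow> real \<Rightarrow> real \<Rightarrow> real \<Rightarrow> real \<Rightarrow> bool" where
  "bdry_orientation_preserving f w1 h1 w2 h2 \<longleftrightarrow>
     winding_number (toC \<circ> f \<circ> ofC \<circ> rect_loop w1 h1) (Complex (w2/2) (h2/2)) = 1"

end

theory Submission
  imports Defs
begin

no_notation fps_nth (infixl \<open>$\<close> 75)

lemma pt_nth [simp]: "pt x y $ 1 = x" "pt x y $ 2 = y"
  by (simp_all add: pt_def)

lemma vec2_eq_iff: "(z::real^2) = w \<longleftrightarrow> z$1 = w$1 \<and> z$2 = w$2"
  by (metis (mono_tags) exhaust_2 vec_eq_iff)

lemma pt_eta: "pt (z$1) (z$2) = z"
  by (simp add: vec2_eq_iff)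

lemma pt_eq_iff [simp]: "pt x y = pt u v \<longleftrightarrow> x = u \<and> y = v"
  by (simp add: vec2_eq_iff)

lemma pt_arith [simp]: "pt x y + pt u v = pt (x+u) (y+v)" "pt x y - pt u v = pt (x-u) (y-v)"
  "c *\<^sub>R pt x y = pt (c*x) (c*y)" "- pt x y = pt (-x) (-y)" "(0::real^2) = pt 0 0"
  by (simp_all add: vec2_eq_iff)

lemma norm_pt: "norm (pt x y) = sqrt (x^2 + y^2)"
  by (simp add: norm_vec_def L2_set_def sum_2 power2_eq_square)

lemma norm_vec2: "norm (z::real^2) = sqrt ((z$1)^2 + (z$2)^2)"
  by (metis norm_pt pt_eta)

lemma dist_pt: "dist (pt x y) (pt u v) = sqrt ((x-u)^2 + (y-v)^2)"
  by (simp add: dist_norm norm_pt)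

lemma seg_real: "(t::real) \<in> closed_segment a b \<longleftrightarrow> min a b \<le> t \<and> t \<le> max a b"
  by (auto simp: closed_segment_eq_real_ivl min_def max_def)

lemma seg_h: "closed_segment (pt x0 y) (pt x1 y) = {z. z$2 = y \<and> min x0 x1 \<le> z$1 \<and> z$1 \<le> max x0 x1}"
proof -
  have "z \<in> closed_segment (pt x0 y) (pt x1 y) \<longleftrightarrow> z$2 = y \<and> z$1 \<in> closed_segment x0 x1" for z
  proof
    assume "z \<in> closed_segment (pt x0 y) (pt x1 y)"
    then obtain u where u: "0 \<le> u" "u \<le> 1" "z = (1-u) *\<^sub>R pt x0 y + u *\<^sub>R pt x1 y" by (auto simp: in_segment)
    then show "z$2 = y \<and> z$1 \<in> closed_segment x0 x1"
      by (auto simp: in_segment algebra_simps)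
  next
    assume "z$2 = y \<and> z$1 \<in> closed_segment x0 x1"
    then obtain u where u: "0 \<le> u" "u \<le> 1" "z$1 = (1-u) * x0 + u * x1" "z$2 = y" by (auto simp: in_segment)
    then have "z = (1-u) *\<^sub>R pt x0 y + u *\<^sub>R pt x1 y" by (auto simp: vec2_eq_iff algebra_simps)
    with u show "z \<in> closed_segment (pt x0 y) (pt x1 y)" by (auto simp: in_segment)
  qed
  then show ?thesis unfolding seg_real by blast
qed

lemma seg_v: "closed_segment (pt x y0) (pt x y1) = {z. z$1 = x \<and> min y0 y1 \<le> z$2 \<and> z$2 \<le> max y0 y1}"
proof -
  have "z \<in> closed_segment (pt x y0) (pt x y1) \<longleftrightarrow> z$1 = x \<and> z$2 \<in> closed_segment y0 y1" for z
  proof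
    assume "z \<in> closed_segment (pt x y0) (pt x y1)"
    then obtain u where u: "0 \<le> u" "u \<le> 1" "z = (1-u) *\<^sub>R pt x y0 + u *\<^sub>R pt x y1" by (auto simp: in_segment)
    then show "z$1 = x \<and> z$2 \<in> closed_segment y0 y1"
      by (auto simp: in_segment algebra_simps)
  next
    assume "z$1 = x \<and> z$2 \<in> closed_segment y0 y1"
    then obtain u where u: "0 \<le> u" "u \<le> 1" "z$2 = (1-u) * y0 + u * y1" "z$1 = x" by (auto simp: in_segment)
    then have "z = (1-u) *\<^sub>R pt x y0 + u *\<^sub>R pt x y1" by (auto simp: vec2_eq_iff algebra_simps)
    with u show "z \<in> closed_segment (pt x y0) (pt x y1)" by (auto simp: in_segment)
  qed
  then show ?thesis unfolding seg_real by blast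
qed

lemma rect_iff: "z \<in> rect w h \<longleftrightarrow> 0 \<le> z$1 \<and> z$1 \<le> w \<and> 0 \<le> z$2 \<and> z$2 \<le> h"
  by (simp add: rect_def)

lemma rect_cbox: "rect w h = cbox (pt 0 0) (pt w h)"
  by (auto simp: rect_def mem_box_cart(2) forall_2)

lemma frontier_rect: assumes "0 < w" "0 < h"
  shows "frontier (rect w h) = {z. z \<in> rect w h \<and> (z$1 = 0 \<or> z$1 = w \<or> z$2 = 0 \<or> z$2 = h)}"
proof -
  have "pt (w/2) (h/2) \<in> box (pt 0 0) (pt w h)" using assms by (auto simp: mem_box_cart forall_2)
  then have "box (pt 0 0) (pt w h) \<noteq> {}" by blast
  then have "frontier (rect w h) = cbox (pt 0 0) (pt w h) - box (pt 0 0) (pt w h)"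
    unfolding rect_cbox by (simp add: frontier_cbox)
  moreover have "z \<in> cbox (pt 0 0) (pt w h) - box (pt 0 0) (pt w h) \<longleftrightarrow>
     z \<in> rect w h \<and> (z$1 = 0 \<or> z$1 = w \<or> z$2 = 0 \<or> z$2 = h)" for z
    unfolding Diff_iff mem_box_cart forall_2 rect_iff by auto
  ultimately show ?thesis by blast
qed

lemma interior_rect: "interior (rect w h) = {z. 0 < z$1 \<and> z$1 < w \<and> 0 < z$2 \<and> z$2 < h}"
  unfolding rect_cbox interior_cbox by (auto simp: mem_box_cart forall_2)


definition bil :: "real \<Rightarrow> (real \<Rightarrow> real) \<Rightarrow> bool" where
  "bil K \<phi> \<longleftrightarrow> K \<ge> 1 \<and> \<phi> 0 = 0 \<and> \<phi> 1 = 1 \<and>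
     (\<forall>s t. 0 \<le> s \<longrightarrow> s \<le> t \<longrightarrow> t \<le> 1 \<longrightarrow> (t-s)/K \<le> \<phi> t - \<phi> s \<and> \<phi> t - \<phi> s \<le> K*(t-s))"

definition clamp :: "real \<Rightarrow> real" where "clamp x = max 0 (min 1 x)"
definition ext :: "(real \<Rightarrow> real) \<Rightarrow> real \<Rightarrow> real" where "ext \<phi> x = \<phi> (clamp x) + (x - clamp x)"
definition Phi :: "(real \<Rightarrow> real) \<Rightarrow> real \<Rightarrow> real" where "Phi \<phi> x = integral {-2..x} (ext \<phi>)"
definition Nn :: "(real \<Rightarrow> real) \<Rightarrow> real \<Rightarrow> real \<Rightarrow> real" where
  "Nn \<phi> x h = Phi \<phi> (x+h) - Phi \<phi> x - Phi \<phi> h + Phi \<phi> 0"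
definition Sm :: "(real \<Rightarrow> real) \<Rightarrow> real \<Rightarrow> real \<Rightarrow> real" where
  "Sm \<phi> x h = (if h = 0 then \<phi> x else Nn \<phi> x h / Nn \<phi> 1 h)"

context fixes K \<phi> assumes B: "bil K \<phi>"
begin

lemma K1: "K \<ge> 1" using B by (simp add: bil_def)
lemma phi0: "\<phi> 0 = 0" using B by (simp add: bil_def)
lemma phi1: "\<phi> 1 = 1" using B by (simp add: bil_def)
lemma phi_bil: "0 \<le> s \<Longrightarrow> s \<le> t \<Longrightarrow> t \<le> 1 \<Longrightarrow> (t-s)/K \<le> \<phi> t - \<phi> s \<and> \<phi> t - \<phi> s \<le> K*(t-s)"
  using B by (simp add: bil_def)

lemma phi_range: "0 \<le> x \<Longrightarrow> x \<le> 1 \<Longrightarrow> 0 \<le> \<phi> x \<and> \<phi> x \<le> 1"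
proof -
  assume x: "0 \<le> x" "x \<le> 1"
  have "0 \<le> (x-0)/K" using x K1 by simp
  also have "\<dots> \<le> \<phi> x - \<phi> 0" using phi_bil[of 0 x] x by simp
  finally have 1: "0 \<le> \<phi> x" using phi0 by simp
  have "0 \<le> (1-x)/K" using x K1 by simp
  also have "\<dots> \<le> \<phi> 1 - \<phi> x" using phi_bil[of x 1] x by simp
  finally show ?thesis using 1 phi1 by simp
qed

lemma ext_eq: "0 \<le> x \<Longrightarrow> x \<le> 1 \<Longrightarrow> ext \<phi> x = \<phi> x"
  by (simp add: ext_def clamp_def)

lemma ext_mono: assumes "s \<le> t"
  shows "(t-s)/K \<le> ext \<phi> t - ext \<phi> s \<and> ext \<phi> t - ext \<phi> s \<le> K*(t-s)"
proof -
  have c: "0 \<le> clamp s" "clamp s \<le> clamp t" "clamp t \<le> 1" "clamp t - clamp s \<le> t - s"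
    using assms by (auto simp: clamp_def)
  have b: "(clamp t - clamp s)/K \<le> \<phi> (clamp t) - \<phi> (clamp s)"
          "\<phi> (clamp t) - \<phi> (clamp s) \<le> K * (clamp t - clamp s)"
    using phi_bil[OF c(1,2,3)] by auto
  have d: "ext \<phi> t - ext \<phi> s = (\<phi> (clamp t) - \<phi> (clamp s)) + ((t - s) - (clamp t - clamp s))"
    by (simp add: ext_def)
  have K: "K \<ge> 1" by (rule K1)
  have e1: "((t - s) - (clamp t - clamp s)) / K \<le> ((t - s) - (clamp t - clamp s))"
    using c(4) K by (simp add: divide_le_eq mult_le_cancel_left1)
  have e2: "((t - s) - (clamp t - clamp s)) \<le> K * ((t - s) - (clamp t - clamp s))"
    using c(4) K by (simp add: mult_le_cancel_right1)
  have "(t-s)/K = (clamp t - clamp s)/K + ((t - s) - (clamp t - clamp s)) / K"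
    by (simp add: diff_divide_distrib)
  then show ?thesis using b d e1 e2 by (simp add: algebra_simps)
qed

lemma ext_lip: "\<bar>ext \<phi> t - ext \<phi> s\<bar> \<le> K * \<bar>t - s\<bar>"
proof (cases "s \<le> t")
  case True
  have "0 \<le> (t-s)/K" using True K1 by simp
  then show ?thesis using ext_mono[of s t] True by (simp add: abs_of_nonneg)
next
  case False
  have "0 \<le> (s-t)/K" using False K1 by simp
  then show ?thesis using ext_mono[of t s] False by (simp add: abs_if)
qed

lemma ext_cont: "continuous_on A (ext \<phi>)"
proof -
  have "K > 0" using K1 by simp
  have "lipschitz_on K UNIV (ext \<phi>)"
    using ext_lip K1 by (auto simp: lipschitz_on_def dist_real_def)
  then have "continuous_on UNIV (ext \<phi>)" by (rule lipschitz_on_continuous_on)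
  then show ?thesis using continuous_on_subset by blast
qed

lemma Phi_deriv: assumes "x > -2" shows "(Phi \<phi> has_real_derivative ext \<phi> x) (at x)"
proof -
  have "((\<lambda>u. integral {-2..u} (ext \<phi>)) has_real_derivative ext \<phi> x) (at x within {-2..x+1})"
    by (rule integral_has_real_derivative) (use assms ext_cont in auto)
  moreover have "x \<in> interior {-2..x+1}" using assms by simp
  ultimately show ?thesis unfolding Phi_def using at_within_interior by metis
qed

lemma Phi_shift_deriv: assumes "c + t > -2"
  shows "((\<lambda>t. Phi \<phi> (c + t)) has_real_derivative ext \<phi> (c+t)) (at t)"
proof -
  have "((\<lambda>t. Phi \<phi> (c + t)) has_real_derivative ext \<phi> (c+t) * 1) (at t)"
    by (rule DERIV_chain2[of "Phi \<phi>" "ext \<phi> (c+t)" "\<lambda>t. c+t", OF Phi_deriv[OF assms]]) (auto intro!: derivative_eq_intros)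
  then show ?thesis by simp
qed

lemma Nn_deriv_h: assumes "x + h > -2" "h > -2"
  shows "((\<lambda>h. Nn \<phi> x h) has_real_derivative (ext \<phi> (x+h) - ext \<phi> h)) (at h)"
proof -
  have "((\<lambda>h. Phi \<phi> (x+h) - Phi \<phi> x - Phi \<phi> h + Phi \<phi> 0) has_real_derivative
      (ext \<phi> (x+h) - 0 - ext \<phi> h + 0)) (at h)"
    by (intro DERIV_add DERIV_diff Phi_shift_deriv Phi_deriv DERIV_const) (use assms in auto)
  then show ?thesis unfolding Nn_def by simp
qed

lemma Nn_deriv_x: assumes "x > -2" "x + h > -2"
  shows "((\<lambda>x. Nn \<phi> x h) has_real_derivative (ext \<phi> (x+h) - ext \<phi> x)) (at x)"
proof -
  have "((\<lambda>x. Phi \<phi> (h+x) - Phi \<phi> x - Phi \<phi> h + Phi \<phi> 0) has_real_derivative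
      (ext \<phi> (h+x) - ext \<phi> x - 0 + 0)) (at x)"
    by (intro DERIV_add DERIV_diff Phi_shift_deriv Phi_deriv DERIV_const) (use assms in auto)
  then show ?thesis unfolding Nn_def by (simp add: add.commute)
qed

lemma Nn_zero: "Nn \<phi> x 0 = 0" "Nn \<phi> 0 h = 0"
  by (simp_all add: Nn_def)

lemma Nn_mvt: assumes "x \<ge> -1" "h > 0"
  shows "\<exists>\<xi>. 0 < \<xi> \<and> \<xi> < h \<and> Nn \<phi> x h = h * (ext \<phi> (x+\<xi>) - ext \<phi> \<xi>)"
proof -
  have "\<exists>z. 0 < z \<and> z < h \<and> Nn \<phi> x h - Nn \<phi> x 0 = (h - 0) * (ext \<phi> (x+z) - ext \<phi> z)"
    by (rule MVT2[OF assms(2)]) (rule Nn_deriv_h, use assms in auto)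
  then show ?thesis by (simp add: Nn_zero)
qed

lemma D_bounds: assumes "0 < h" shows "h/K \<le> Nn \<phi> 1 h \<and> Nn \<phi> 1 h \<le> K*h"
proof -
  obtain \<xi> where xi: "0 < \<xi>" "\<xi> < h" "Nn \<phi> 1 h = h * (ext \<phi> (1+\<xi>) - ext \<phi> \<xi>)"
    using Nn_mvt[of 1 h] assms by auto
  have "1/K \<le> ext \<phi> (1+\<xi>) - ext \<phi> \<xi>" "ext \<phi> (1+\<xi>) - ext \<phi> \<xi> \<le> K"
    using ext_mono[of \<xi> "1+\<xi>"] by auto
  then show ?thesis using xi assms
    by (auto simp: divide_le_eq mult_le_cancel_left_pos mult.commute[of h] intro: mult_right_mono)
qed

lemma D_pos: "0 < h \<Longrightarrow> 0 < Nn \<phi> 1 h"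
  using D_bounds[of h] K1 by (smt (verit) divide_pos_pos)

lemma Sm_0: "h \<ge> 0 \<Longrightarrow> Sm \<phi> 0 h = 0"
  by (simp add: Sm_def Nn_zero phi0)

lemma Sm_1: "h \<ge> 0 \<Longrightarrow> Sm \<phi> 1 h = 1"
  using D_pos[of h] by (cases "h = 0") (simp_all add: Sm_def phi1)

end

definition Sh :: "(real \<Rightarrow> real) \<Rightarrow> real \<Rightarrow> real \<Rightarrow> real" where
  "Sh \<phi> x h = ((ext \<phi> (x+h) - ext \<phi> h) * Nn \<phi> 1 h - Nn \<phi> x h * (ext \<phi> (1+h) - ext \<phi> h)) / (Nn \<phi> 1 h)^2"

definition Sx :: "(real \<Rightarrow> real) \<Rightarrow> real \<Rightarrow> real \<Rightarrow> real" where
  "Sx \<phi> x h = (ext \<phi> (x+h) - ext \<phi> x) / Nn \<phi> 1 h"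

context fixes K \<phi> assumes B: "bil K \<phi>"
begin

lemmas K1' = K1[OF B] and phi0' = phi0[OF B] and phi1' = phi1[OF B]
  and ext_mono' = ext_mono[OF B] and ext_lip' = ext_lip[OF B] and Nn_mvt' = Nn_mvt[OF B]
  and D_bounds' = D_bounds[OF B] and D_pos' = D_pos[OF B] and phi_range' = phi_range[OF B]
  and ext_eq' = ext_eq[OF B]

lemma ext0: "ext \<phi> 0 = 0" and ext1: "ext \<phi> 1 = 1"
  using ext_eq' phi0' phi1' by auto

lemma ext_lip_h: "\<bar>a - b\<bar> \<le> h \<Longrightarrow> \<bar>ext \<phi> a - ext \<phi> b\<bar> \<le> K*h"
  using ext_lip'[of a b] K1' mult_left_mono[of "\<bar>a-b\<bar>" h K] by linarith

lemma Sm_close: assumes x: "0 \<le> x" "x \<le> 1" and h: "0 \<le> h" "h \<le> 1"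
  shows "\<bar>Sm \<phi> x h - \<phi> x\<bar> \<le> 4*K^2*h"
proof (cases "h = 0")
  case True then show ?thesis by (simp add: Sm_def)
next
  case False
  then have hp: "h > 0" using h by simp
  obtain \<xi> where xi: "0 < \<xi>" "\<xi> < h" "Nn \<phi> x h = h * (ext \<phi> (x+\<xi>) - ext \<phi> \<xi>)"
    using Nn_mvt'[of x h] hp x by auto
  obtain \<eta> where eta: "0 < \<eta>" "\<eta> < h" "Nn \<phi> 1 h = h * (ext \<phi> (1+\<eta>) - ext \<phi> \<eta>)"
    using Nn_mvt'[of 1 h] hp by auto
  define u where "u = ext \<phi> (x+\<xi>) - ext \<phi> \<xi>"
  define v where "v = ext \<phi> (1+\<eta>) - ext \<phi> \<eta>"
  have K: "K \<ge> 1" by (rule K1')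
  have v1: "1/K \<le> v" using ext_mono'[of \<eta> "1+\<eta>"] by (simp add: v_def)
  have vpos: "v > 0" using v1 K by (smt (verit) divide_pos_pos)
  have Sm: "Sm \<phi> x h = u / v" using False xi eta hp by (simp add: Sm_def u_def v_def)
  have a1: "\<bar>ext \<phi> (x+\<xi>) - ext \<phi> x\<bar> \<le> K*h" by (rule ext_lip_h) (use xi in auto)
  have a2: "\<bar>ext \<phi> \<xi> - ext \<phi> 0\<bar> \<le> K*h" by (rule ext_lip_h) (use xi in auto)
  have a3: "\<bar>ext \<phi> (1+\<eta>) - ext \<phi> 1\<bar> \<le> K*h" by (rule ext_lip_h) (use eta in auto)
  have a4: "\<bar>ext \<phi> \<eta> - ext \<phi> 0\<bar> \<le> K*h" by (rule ext_lip_h) (use eta in auto)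
  have u_close: "\<bar>u - \<phi> x\<bar> \<le> 2*K*h"
    using a1 a2 ext_eq'[OF x] ext0 unfolding u_def by linarith
  have v_close: "\<bar>v - 1\<bar> \<le> 2*K*h"
    using a3 a4 ext0 ext1 unfolding v_def by linarith
  have px: "\<bar>\<phi> x\<bar> \<le> 1" using phi_range'[OF x] by simp
  have "\<bar>\<phi> x * (v - 1)\<bar> \<le> 1 * (2*K*h)"
    unfolding abs_mult by (rule mult_mono) (use px v_close in auto)
  then have pv: "\<bar>\<phi> x * (v - 1)\<bar> \<le> 2*K*h" by simp
  have "u - \<phi> x * v = (u - \<phi> x) - \<phi> x * (v - 1)" by (simp add: algebra_simps)
  then have "\<bar>u - \<phi> x * v\<bar> \<le> \<bar>u - \<phi> x\<bar> + \<bar>\<phi> x * (v - 1)\<bar>"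
    by (metis abs_triangle_ineq4)
  then have num: "\<bar>u - \<phi> x * v\<bar> \<le> 4*K*h" using u_close pv by linarith
  have iv: "1/v \<le> K"
  proof -
    have "1/v \<le> 1/(1/K)" using v1 K vpos by (intro divide_left_mono) auto
    then show ?thesis by simp
  qed
  have "Sm \<phi> x h - \<phi> x = (u - \<phi> x * v) * (1/v)" using vpos Sm by (simp add: field_simps)
  then have "\<bar>Sm \<phi> x h - \<phi> x\<bar> = \<bar>u - \<phi> x * v\<bar> * (1/v)" using vpos by (simp add: abs_mult)
  also have "\<dots> \<le> (4*K*h) * K"
    by (rule mult_mono) (use num iv vpos in auto)
  finally show ?thesis by (simp add: power2_eq_square algebra_simps)
qed


lemma Sm_deriv_x: assumes "h > 0" "x > -1"
  shows "((\<lambda>x. Sm \<phi> x h) has_real_derivative Sx \<phi> x h) (at x)"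
proof -
  have "((\<lambda>x. Nn \<phi> x h / Nn \<phi> 1 h) has_real_derivative (ext \<phi> (x+h) - ext \<phi> x) / Nn \<phi> 1 h) (at x)"
    by (rule DERIV_cdivide, rule Nn_deriv_x[OF B]) (use assms in auto)
  moreover have "(\<lambda>x. Sm \<phi> x h) = (\<lambda>x. Nn \<phi> x h / Nn \<phi> 1 h)" using assms by (auto simp: Sm_def)
  ultimately show ?thesis by (simp add: Sx_def)
qed

lemma Sx_bounds: assumes "h > 0" shows "1/K^2 \<le> Sx \<phi> x h \<and> Sx \<phi> x h \<le> K^2"
proof -
  have K: "K \<ge> 1" by (rule K1')
  have n: "h/K \<le> ext \<phi> (x+h) - ext \<phi> x" "ext \<phi> (x+h) - ext \<phi> x \<le> K*h" using ext_mono'[of x "x+h"] assms by auto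
  have d: "h/K \<le> Nn \<phi> 1 h" "Nn \<phi> 1 h \<le> K*h" using D_bounds'[OF assms] by auto
  have dp: "Nn \<phi> 1 h > 0" using D_pos'[OF assms] .
  have hK: "0 < h/K" using assms K by simp
  have "1/K^2 = (h/K) / (K*h)" using assms K by (simp add: power2_eq_square)
  also have "\<dots> \<le> (ext \<phi> (x+h) - ext \<phi> x) / Nn \<phi> 1 h"
    apply (rule frac_le) using n d dp hK by linarith+
  finally have 1: "1/K^2 \<le> Sx \<phi> x h" by (simp add: Sx_def)
  have "(ext \<phi> (x+h) - ext \<phi> x) / Nn \<phi> 1 h \<le> (K*h) / (h/K)"
    apply (rule frac_le) using n d dp hK by linarith+
  also have "\<dots> = K^2" using assms K by (simp add: power2_eq_square)
  finally show ?thesis using 1 by (simp add: Sx_def)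
qed

lemma Sm_deriv_h: assumes "h > 0" "x > -1"
  shows "((\<lambda>h. Sm \<phi> x h) has_real_derivative Sh \<phi> x h) (at h)"
proof -
  have dp: "Nn \<phi> 1 h \<noteq> 0" using D_pos'[OF assms(1)] by simp
  have n1: "((\<lambda>h. Nn \<phi> x h) has_real_derivative ext \<phi> (x+h) - ext \<phi> h) (at h)"
    by (rule Nn_deriv_h[OF B]) (use assms in auto)
  have n2: "((\<lambda>h. Nn \<phi> 1 h) has_real_derivative ext \<phi> (1+h) - ext \<phi> h) (at h)"
    by (rule Nn_deriv_h[OF B]) (use assms in auto)
  have "((\<lambda>h. Nn \<phi> x h / Nn \<phi> 1 h) has_real_derivative Sh \<phi> x h) (at h)"
    using DERIV_divide[OF n1 n2 dp] unfolding Sh_def by (simp add: power2_eq_square)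
  then show ?thesis
    by (rule has_field_derivative_transform_within_open[where S="{0<..}"]) (use assms in \<open>auto simp: Sm_def\<close>)
qed

lemma Sh_bound: assumes x: "0 \<le> x" "x \<le> 1" and h: "0 < h" "h \<le> 1"
  shows "\<bar>Sh \<phi> x h\<bar> \<le> 4*K^4"
proof -
  have K: "K \<ge> 1" by (rule K1')
  obtain \<xi> where xi: "0 < \<xi>" "\<xi> < h" "Nn \<phi> x h = h * (ext \<phi> (x+\<xi>) - ext \<phi> \<xi>)"
    using Nn_mvt'[of x h] h x by auto
  obtain \<eta> where eta: "0 < \<eta>" "\<eta> < h" "Nn \<phi> 1 h = h * (ext \<phi> (1+\<eta>) - ext \<phi> \<eta>)"
    using Nn_mvt'[of 1 h] h by auto
  define uh where "uh = ext \<phi> (x+h) - ext \<phi> h"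
  define vh where "vh = ext \<phi> (1+h) - ext \<phi> h"
  define u where "u = ext \<phi> (x+\<xi>) - ext \<phi> \<xi>"
  define v where "v = ext \<phi> (1+\<eta>) - ext \<phi> \<eta>"
  have v1: "1/K \<le> v" using ext_mono'[of \<eta> "1+\<eta>"] by (simp add: v_def)
  have vpos: "v > 0" using v1 K by (smt (verit) divide_pos_pos)
  have uh_b: "\<bar>uh\<bar> \<le> K" using ext_lip_h[of "x+h" h 1] x unfolding uh_def by simp
  have vh_b: "\<bar>vh\<bar> \<le> K" using ext_lip_h[of "1+h" h 1] unfolding vh_def by simp
  have b1: "\<bar>ext \<phi> (x+h) - ext \<phi> (x+\<xi>)\<bar> \<le> K*h" by (rule ext_lip_h) (use xi in auto)
  have b2: "\<bar>ext \<phi> h - ext \<phi> \<xi>\<bar> \<le> K*h" by (rule ext_lip_h) (use xi in auto)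
  have b3: "\<bar>ext \<phi> (1+h) - ext \<phi> (1+\<eta>)\<bar> \<le> K*h" by (rule ext_lip_h) (use eta in auto)
  have b4: "\<bar>ext \<phi> h - ext \<phi> \<eta>\<bar> \<le> K*h" by (rule ext_lip_h) (use eta in auto)
  have du: "\<bar>uh - u\<bar> \<le> 2*K*h" using b1 b2 unfolding uh_def u_def by linarith
  have dv: "\<bar>v - vh\<bar> \<le> 2*K*h" using b3 b4 unfolding vh_def v_def by linarith
  have e1: "\<bar>uh * (v - vh)\<bar> \<le> K * (2*K*h)" unfolding abs_mult
    by (rule mult_mono) (use uh_b dv K in auto)
  have e2: "\<bar>vh * (uh - u)\<bar> \<le> K * (2*K*h)" unfolding abs_mult
    by (rule mult_mono) (use vh_b du K in auto)
  have kk: "K * (2*K*h) = 2*K^2*h" by (simp add: power2_eq_square)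
  have "uh * v - u * vh = uh * (v - vh) + vh * (uh - u)" by (simp add: algebra_simps)
  then have "\<bar>uh * v - u * vh\<bar> \<le> \<bar>uh * (v - vh)\<bar> + \<bar>vh * (uh - u)\<bar>"
    by (metis abs_triangle_ineq)
  then have num: "\<bar>uh * v - u * vh\<bar> \<le> 4*K^2*h" using e1 e2 kk by linarith
  have "Sh \<phi> x h = (uh * (h * v) - (h*u) * vh) / (h * v)^2"
    unfolding Sh_def uh_def vh_def u_def v_def xi(3) eta(3) by simp
  also have "\<dots> = (uh * v - u * vh) / (h * v^2)"
    using h vpos by (simp add: field_simps power2_eq_square)
  finally have Sh_eq: "Sh \<phi> x h = (uh * v - u * vh) / (h * v^2)" .
  have iv: "1/v \<le> K"
  proof -
    have "1/v \<le> 1/(1/K)" using v1 K vpos by (intro divide_left_mono) auto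
    then show ?thesis by simp
  qed
  have iv2: "1/v^2 \<le> K^2" using iv vpos
    by (metis power_mono power_one_over less_eq_real_def zero_le_divide_1_iff)
  have "\<bar>Sh \<phi> x h\<bar> = (\<bar>uh * v - u * vh\<bar> / h) * (1/v^2)" using Sh_eq h vpos by (simp add: abs_mult)
  also have "\<dots> \<le> (4*K^2) * K^2"
  proof (rule mult_mono)
    show "\<bar>uh * v - u * vh\<bar> / h \<le> 4 * K\<^sup>2" using num h by (simp add: divide_le_eq mult.commute)
  qed (use iv2 K in auto)
  finally show ?thesis by (simp add: power2_eq_square power4_eq_xxxx algebra_simps)
qed

lemma Sm_strict_mono: assumes "0 \<le> x" "x < x'" "x' \<le> 1" "h \<ge> 0"
  shows "Sm \<phi> x h < Sm \<phi> x' h"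
proof (cases "h = 0")
  case True
  have "0 < (x'-x)/K" using assms K1' by simp
  also have "\<dots> \<le> \<phi> x' - \<phi> x" using phi_bil[OF B, of x x'] assms by simp
  finally show ?thesis using True by (simp add: Sm_def)
next
  case False
  then have hp: "h > 0" using assms by simp
  have "Nn \<phi> x h < Nn \<phi> x' h"
  proof (rule DERIV_pos_imp_increasing[OF assms(2)])
    fix t assume t: "x \<le> t" "t \<le> x'"
    have "0 < h/K" using hp K1' by simp
    also have "\<dots> \<le> ext \<phi> (t+h) - ext \<phi> t" using ext_mono'[of t "t+h"] hp by simp
    finally show "\<exists>y. ((\<lambda>x. Nn \<phi> x h) has_real_derivative y) (at t) \<and> 0 < y"
      using Nn_deriv_x[OF B, of t h] t assms hp by auto
  qed
  then show ?thesis using hp D_pos'[OF hp] by (simp add: Sm_def divide_strict_right_mono)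
qed

lemma Sm_range: assumes "0 \<le> x" "x \<le> 1" "h \<ge> 0"
  shows "0 \<le> Sm \<phi> x h \<and> Sm \<phi> x h \<le> 1"
  using Sm_strict_mono[of 0 x h] Sm_strict_mono[of x 1 h] Sm_0[OF B] Sm_1[OF B] assms
  by (cases "x = 0"; cases "x = 1") auto

end

definition hh :: "real \<Rightarrow> real" where "hh y = y * (1 - y)"

definition Xf :: "(real \<Rightarrow> real) \<Rightarrow> (real \<Rightarrow> real) \<Rightarrow> real^2 \<Rightarrow> real" where
  "Xf \<phi>0 \<phi>1 z = (1 - z$2) * Sm \<phi>0 (z$1) (hh (z$2)) + z$2 * Sm \<phi>1 (z$1) (hh (z$2))"

lemma hh_pos: "0 < y \<Longrightarrow> y < 1 \<Longrightarrow> 0 < hh y" by (simp add: hh_def)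
lemma hh_le: "0 \<le> y \<Longrightarrow> y \<le> 1 \<Longrightarrow> 0 \<le> hh y \<and> hh y \<le> 1 \<and> hh y \<le> y \<and> hh y \<le> 1 - y"
proof -
  assume y: "0 \<le> y" "y \<le> 1"
  have a: "y * (1 - y) \<le> y * 1" by (rule mult_left_mono) (use y in auto)
  have b: "y * (1 - y) \<le> 1 * (1 - y)" by (rule mult_right_mono) (use y in auto)
  have c: "0 \<le> y * (1 - y)" using y by simp
  show ?thesis using a b c y by (simp add: hh_def)
qed
lemma hh_01: "hh 0 = 0" "hh 1 = 0" by (simp_all add: hh_def)
lemma hh_deriv: "(hh has_real_derivative (1 - 2*y)) (at y)"
  unfolding hh_def by (auto intro!: derivative_eq_intros)

lemma pt_deriv1: "((\<lambda>t. pt t y) has_derivative (\<lambda>s. pt s 0)) (at x)"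
proof -
  have "((\<lambda>t. t *\<^sub>R pt 1 0 + pt 0 y) has_derivative (\<lambda>s. s *\<^sub>R pt 1 0 + 0)) (at x)"
    by (intro derivative_intros)
  then show ?thesis by simp
qed

lemma pt_deriv2: "((\<lambda>t. pt x t) has_derivative (\<lambda>s. pt 0 s)) (at y)"
proof -
  have "((\<lambda>t. t *\<^sub>R pt 0 1 + pt x 0) has_derivative (\<lambda>s. s *\<^sub>R pt 0 1 + 0)) (at y)"
    by (intro derivative_intros)
  then show ?thesis by simp
qed

lemma lin2_repr: assumes "linear (D :: real^2 \<Rightarrow> real)" shows "D v = D (pt 1 0) * v$1 + D (pt 0 1) * v$2"
proof -
  have "v = (v$1) *\<^sub>R pt 1 0 + (v$2) *\<^sub>R pt 0 1" by (simp add: vec2_eq_iff)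
  then have "D v = D ((v$1) *\<^sub>R pt 1 0 + (v$2) *\<^sub>R pt 0 1)" by (rule arg_cong[where f=D])
  also have "\<dots> = (v$1) * D (pt 1 0) + (v$2) * D (pt 0 1)"
    by (simp only: linear_add[OF assms] linear_scale[OF assms]) simp
  finally show ?thesis by simp
qed

lemma partial1: assumes "((F :: real^2 \<Rightarrow> real) has_derivative D) (at (pt x y))"
  shows "((\<lambda>t. F (pt t y)) has_real_derivative D (pt 1 0)) (at x)"
proof -
  have "((\<lambda>t. F (pt t y)) has_derivative (\<lambda>s. D (pt s 0))) (at x)"
    using has_derivative_compose[OF pt_deriv1 assms] by (simp add: o_def)
  moreover have "linear D" using assms has_derivative_linear by blast
  moreover have "(\<lambda>s. D (pt s 0)) = (*) (D (pt 1 0))"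
  proof (rule HOL.ext)
    fix s have "D (pt s 0) = D (pt 1 0) * s + D (pt 0 1) * 0" using lin2_repr[OF \<open>linear D\<close>, of "pt s 0"] by simp
    then show "D (pt s 0) = D (pt 1 0) * s" by simp
  qed
  ultimately show ?thesis by (simp add: has_field_derivative_def del: pt_arith)
qed

lemma partial2: assumes "((F :: real^2 \<Rightarrow> real) has_derivative D) (at (pt x y))"
  shows "((\<lambda>t. F (pt x t)) has_real_derivative D (pt 0 1)) (at y)"
proof -
  have "((\<lambda>t. F (pt x t)) has_derivative (\<lambda>s. D (pt 0 s))) (at y)"
    using has_derivative_compose[OF pt_deriv2 assms] by (simp add: o_def)
  moreover have "linear D" using assms has_derivative_linear by blast
  moreover have "(\<lambda>s. D (pt 0 s)) = (*) (D (pt 0 1))"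
  proof (rule HOL.ext)
    fix s have "D (pt 0 s) = D (pt 1 0) * 0 + D (pt 0 1) * s" using lin2_repr[OF \<open>linear D\<close>, of "pt 0 s"] by simp
    then show "D (pt 0 s) = D (pt 0 1) * s" by simp
  qed
  ultimately show ?thesis by (simp add: has_field_derivative_def del: pt_arith)
qed

lemma Phi_differentiable: assumes "bil K \<phi>" "w > -2" shows "Phi \<phi> differentiable (at w)"
  using Phi_deriv[OF assms] real_differentiable_def by (metis differentiableI has_field_derivative_imp_has_derivative)

lemma comp_nth_diff: "(\<lambda>z::real^2. z$i) differentiable (at z)"
  by (rule bounded_linear_imp_differentiable[OF bounded_linear_vec_nth])

lemma Xf_differentiable:
  fixes z :: "real^2"
  assumes B0: "bil K \<phi>0" and B1: "bil K \<phi>1" and z: "z$1 > -1" "0 < z$2" "z$2 < 1"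
  shows "Xf \<phi>0 \<phi>1 differentiable (at z)"
proof -
  define Q where "Q = (\<lambda>z::real^2. (1 - z$2) * (Nn \<phi>0 (z$1) (hh (z$2)) / Nn \<phi>0 1 (hh (z$2)))
     + z$2 * (Nn \<phi>1 (z$1) (hh (z$2)) / Nn \<phi>1 1 (hh (z$2))))"
  have hd: "(\<lambda>z::real^2. hh (z$2)) differentiable (at z)"
    unfolding hh_def by (intro differentiable_mult differentiable_diff comp_nth_diff differentiable_const)
  have hz: "0 < hh (z$2)" "hh (z$2) \<le> 1" using hh_pos[of "z$2"] hh_le[of "z$2"] z by auto
  have Pc: "(\<lambda>z. Phi \<phi> (g z)) differentiable (at z)"
    if "bil K \<phi>" "g differentiable (at z)" "g z > -2" for \<phi> and g :: "real^2 \<Rightarrow> real"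
    by (rule differentiable_compose[OF Phi_differentiable[OF that(1,3)] that(2)])
  have Nd: "(\<lambda>z. Nn \<phi> (g z) (hh (z$2))) differentiable (at z)"
    if "bil K \<phi>" "g differentiable (at z)" "g z > -1" for \<phi> and g :: "real^2 \<Rightarrow> real"
    unfolding Nn_def
    by (intro differentiable_add differentiable_diff Pc[OF that(1)] that(2) hd differentiable_const)
      (use that hz in auto)
  have Dn: "Nn \<phi> 1 (hh (z$2)) \<noteq> 0" if "bil K \<phi>" for \<phi>
    using D_pos[OF that hz(1)] by simp
  have "Q differentiable (at z)"
    unfolding Q_def
    by (intro differentiable_add differentiable_mult differentiable_diff differentiable_divide
        differentiable_const comp_nth_diff Nd B0 B1 Dn) (use z in simp_all)
  then obtain D where D: "(Q has_derivative D) (at z)" by (auto simp: differentiable_def)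
  have "(Xf \<phi>0 \<phi>1 has_derivative D) (at z)"
  proof (rule has_derivative_transform_within_open[OF D, of "{z. 0 < z$2 \<and> z$2 < 1}"])
    show "open {z::real^2. 0 < z$2 \<and> z$2 < 1}"
      by (intro open_Collect_conj open_Collect_less continuous_intros)
    fix w :: "real^2" assume "w \<in> {z::real^2. 0 < z$2 \<and> z$2 < 1}"
    then have "hh (w$2) \<noteq> 0" using hh_pos[of "w$2"] by auto
    then show "Q w = Xf \<phi>0 \<phi>1 w" by (simp add: Q_def Xf_def Sm_def)
  qed (use z in auto)
  then show ?thesis by (auto simp: differentiable_def)
qed


lemma cont_by_bound:
  fixes F g :: "'a::metric_space \<Rightarrow> real"
  assumes "\<And>w. w \<in> S \<Longrightarrow> \<bar>F w - F z\<bar> \<le> g w" "continuous (at z within S) g" "g z = 0"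
  shows "continuous (at z within S) F"
proof -
  have g0: "(g \<longlongrightarrow> 0) (at z within S)" using assms(2,3) by (simp add: continuous_within)
  have ev: "eventually (\<lambda>w. norm (F w - F z) \<le> g w) (at z within S)"
    unfolding eventually_at_filter using assms(1) by (auto intro: always_eventually)
  have "((\<lambda>w. F w - F z) \<longlongrightarrow> 0) (at z within S)" by (rule Lim_null_comparison[OF ev g0])
  then show ?thesis by (simp add: continuous_within Lim_null[symmetric])
qed

lemma phi_lip: assumes "bil K \<phi>" "0 \<le> a" "a \<le> 1" "0 \<le> b" "b \<le> 1"
  shows "\<bar>\<phi> a - \<phi> b\<bar> \<le> K * \<bar>a - b\<bar>"
  using ext_lip[OF assms(1), of a b] ext_eq[OF assms(1)] assms by simp

lemma abs_combo: "\<bar>a\<bar> \<le> (A::real) \<Longrightarrow> \<bar>c\<bar> \<le> C \<Longrightarrow> 0 \<le> b \<and> b \<le> 1 \<Longrightarrow> 0 \<le> d \<and> d \<le> 1 \<Longrightarrow>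
  \<bar>a + (0-1)*b + (c + 1*d)\<bar> \<le> 1 + 1 + A + C"
  by (simp add: abs_le_iff)

context fixes K \<phi>0 \<phi>1 assumes B0: "bil K \<phi>0" and B1: "bil K \<phi>1"
begin

lemma K1'': "K \<ge> 1" using K1[OF B0] .

lemma Xf_left: "0 \<le> y \<Longrightarrow> y \<le> 1 \<Longrightarrow> Xf \<phi>0 \<phi>1 (pt 0 y) = 0"
  using Sm_0[OF B0] Sm_0[OF B1] hh_le[of y] by (simp add: Xf_def)
lemma Xf_right: "0 \<le> y \<Longrightarrow> y \<le> 1 \<Longrightarrow> Xf \<phi>0 \<phi>1 (pt 1 y) = 1"
  using Sm_1[OF B0] Sm_1[OF B1] hh_le[of y] by (simp add: Xf_def algebra_simps)
lemma Xf_bot: "Xf \<phi>0 \<phi>1 (pt x 0) = \<phi>0 x"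
  by (simp add: Xf_def hh_01 Sm_def)
lemma Xf_top: "Xf \<phi>0 \<phi>1 (pt x 1) = \<phi>1 x"
  by (simp add: Xf_def hh_01 Sm_def)

lemma Xf_mono: assumes "0 \<le> y" "y \<le> 1" "0 \<le> x" "x < x'" "x' \<le> 1"
  shows "Xf \<phi>0 \<phi>1 (pt x y) < Xf \<phi>0 \<phi>1 (pt x' y)"
proof -
  have h: "hh y \<ge> 0" using hh_le assms by auto
  have a: "Sm \<phi>0 x (hh y) < Sm \<phi>0 x' (hh y)" by (rule Sm_strict_mono[OF B0]) (use assms h in auto)
  have b: "Sm \<phi>1 x (hh y) < Sm \<phi>1 x' (hh y)" by (rule Sm_strict_mono[OF B1]) (use assms h in auto)
  show ?thesis
  proof (cases "y = 0")
    case True then show ?thesis using a by (simp add: Xf_def)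
  next
    case False
    then have "y * Sm \<phi>1 x (hh y) < y * Sm \<phi>1 x' (hh y)" using b assms by simp
    moreover have "(1-y) * Sm \<phi>0 x (hh y) \<le> (1-y) * Sm \<phi>0 x' (hh y)"
      using a assms by (intro mult_left_mono) auto
    ultimately show ?thesis by (simp add: Xf_def)
  qed
qed

lemma Xf_range: assumes "0 \<le> y" "y \<le> 1" "0 \<le> x" "x \<le> 1"
  shows "0 \<le> Xf \<phi>0 \<phi>1 (pt x y) \<and> Xf \<phi>0 \<phi>1 (pt x y) \<le> 1"
  using Xf_mono[of y 0 x] Xf_mono[of y x 1] Xf_left Xf_right assms
  by (cases "x = 0"; cases "x = 1") auto

lemma Xf_near_bot: assumes "0 \<le> y" "y \<le> 1" "0 \<le> x" "x \<le> 1"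
  shows "\<bar>Xf \<phi>0 \<phi>1 (pt x y) - \<phi>0 x\<bar> \<le> (4*K^2+2) * y"
proof -
  have h: "0 \<le> hh y" "hh y \<le> 1" "hh y \<le> y" using hh_le assms(1,2) by auto
  have c0: "\<bar>Sm \<phi>0 x (hh y) - \<phi>0 x\<bar> \<le> 4*K^2*y"
  proof -
    have "4*K^2*hh y \<le> 4*K^2*y" by (rule mult_left_mono) (use h(3) in auto)
    then show ?thesis using Sm_close[OF B0 assms(3,4) h(1,2)] by linarith
  qed
  have r1: "0 \<le> Sm \<phi>1 x (hh y) \<and> Sm \<phi>1 x (hh y) \<le> 1" by (rule Sm_range[OF B1]) (use assms h in auto)
  have r0: "0 \<le> \<phi>0 x \<and> \<phi>0 x \<le> 1" by (rule phi_range[OF B0]) (use assms in auto)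
  have c1: "\<bar>Sm \<phi>1 x (hh y) - \<phi>0 x\<bar> \<le> 2" using r1 r0 by linarith
  have "Xf \<phi>0 \<phi>1 (pt x y) - \<phi>0 x = (1-y) * (Sm \<phi>0 x (hh y) - \<phi>0 x) + y * (Sm \<phi>1 x (hh y) - \<phi>0 x)"
    by (simp add: Xf_def algebra_simps)
  then have "\<bar>Xf \<phi>0 \<phi>1 (pt x y) - \<phi>0 x\<bar> \<le> (1-y) * \<bar>Sm \<phi>0 x (hh y) - \<phi>0 x\<bar> + y * \<bar>Sm \<phi>1 x (hh y) - \<phi>0 x\<bar>"
    using assms abs_triangle_ineq[of "(1-y) * _" "y * _"] by (simp add: abs_mult)
  also have "\<dots> \<le> 1 * (4*K^2*y) + y * 2"
    by (intro add_mono mult_mono) (use assms c0 c1 in auto)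
  finally show ?thesis by (simp add: algebra_simps)
qed

lemma Xf_near_top: assumes "0 \<le> y" "y \<le> 1" "0 \<le> x" "x \<le> 1"
  shows "\<bar>Xf \<phi>0 \<phi>1 (pt x y) - \<phi>1 x\<bar> \<le> (4*K^2+2) * (1 - y)"
proof -
  have h: "0 \<le> hh y" "hh y \<le> 1" "hh y \<le> 1 - y" using hh_le assms(1,2) by auto
  have c1: "\<bar>Sm \<phi>1 x (hh y) - \<phi>1 x\<bar> \<le> 4*K^2*(1-y)"
  proof -
    have "4*K^2*hh y \<le> 4*K^2*(1-y)" by (rule mult_left_mono) (use h(3) in auto)
    then show ?thesis using Sm_close[OF B1 assms(3,4) h(1,2)] by linarith
  qed
  have r0: "0 \<le> Sm \<phi>0 x (hh y) \<and> Sm \<phi>0 x (hh y) \<le> 1" by (rule Sm_range[OF B0]) (use assms h in auto)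
  have r1: "0 \<le> \<phi>1 x \<and> \<phi>1 x \<le> 1" by (rule phi_range[OF B1]) (use assms in auto)
  have c0: "\<bar>Sm \<phi>0 x (hh y) - \<phi>1 x\<bar> \<le> 2" using r1 r0 by linarith
  have "Xf \<phi>0 \<phi>1 (pt x y) - \<phi>1 x = (1-y) * (Sm \<phi>0 x (hh y) - \<phi>1 x) + y * (Sm \<phi>1 x (hh y) - \<phi>1 x)"
    by (simp add: Xf_def algebra_simps)
  then have "\<bar>Xf \<phi>0 \<phi>1 (pt x y) - \<phi>1 x\<bar> \<le> (1-y) * \<bar>Sm \<phi>0 x (hh y) - \<phi>1 x\<bar> + y * \<bar>Sm \<phi>1 x (hh y) - \<phi>1 x\<bar>"
    using assms abs_triangle_ineq[of "(1-y) * _" "y * _"] by (simp add: abs_mult)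
  also have "\<dots> \<le> (1-y) * 2 + 1 * (4*K^2*(1-y))"
    by (intro add_mono mult_mono) (use assms c0 c1 in auto)
  finally show ?thesis by (simp add: algebra_simps)
qed


lemma Xf_cont: "continuous_on (rect 1 1) (Xf \<phi>0 \<phi>1)"
  unfolding continuous_on_eq_continuous_within
proof
  fix z :: "real^2" assume z: "z \<in> rect 1 1"
  then have zr: "0 \<le> z$1" "z$1 \<le> 1" "0 \<le> z$2" "z$2 \<le> 1" by (auto simp: rect_iff)
  have K: "K \<ge> 1" by (rule K1'')
  consider "0 < z$2 \<and> z$2 < 1" | "z$2 = 0" | "z$2 = 1" using zr by linarith
  then show "continuous (at z within rect 1 1) (Xf \<phi>0 \<phi>1)"
  proof cases
    case 1
    have "Xf \<phi>0 \<phi>1 differentiable (at z)"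
      by (rule Xf_differentiable[OF B0 B1]) (use 1 zr in auto)
    then show ?thesis by (rule differentiable_imp_continuous_within[OF differentiable_at_withinI])
  next
    case 2
    show ?thesis
    proof (rule cont_by_bound)
      fix w assume w: "w \<in> rect 1 1"
      then have wr: "0 \<le> w$1" "w$1 \<le> 1" "0 \<le> w$2" "w$2 \<le> 1" by (auto simp: rect_iff)
      have "Xf \<phi>0 \<phi>1 z = \<phi>0 (z$1)"
      proof -
        have "z = pt (z$1) 0" using 2 by (simp add: vec2_eq_iff)
        then have "Xf \<phi>0 \<phi>1 z = Xf \<phi>0 \<phi>1 (pt (z$1) 0)" by (rule arg_cong)
        then show ?thesis by (simp only: Xf_bot)
      qed
      moreover have "\<bar>Xf \<phi>0 \<phi>1 w - \<phi>0 (w$1)\<bar> \<le> (4*K^2+2) * w$2"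
        using Xf_near_bot[OF wr(3,4,1,2)] by (simp add: pt_eta)
      moreover have "\<bar>\<phi>0 (w$1) - \<phi>0 (z$1)\<bar> \<le> K * \<bar>w$1 - z$1\<bar>"
        by (rule phi_lip[OF B0]) (use wr zr in auto)
      ultimately show "\<bar>Xf \<phi>0 \<phi>1 w - Xf \<phi>0 \<phi>1 z\<bar> \<le> (4*K^2+2) * w$2 + K * \<bar>w$1 - z$1\<bar>"
        by linarith
    next
      show "continuous (at z within rect 1 1) (\<lambda>w. (4*K^2+2) * w$2 + K * \<bar>w$1 - z$1\<bar>)"
        by (intro continuous_intros)
    qed (use 2 in simp)
  next
    case 3
    show ?thesis
    proof (rule cont_by_bound)
      fix w assume w: "w \<in> rect 1 1"
      then have wr: "0 \<le> w$1" "w$1 \<le> 1" "0 \<le> w$2" "w$2 \<le> 1" by (auto simp: rect_iff)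
      have "Xf \<phi>0 \<phi>1 z = \<phi>1 (z$1)"
      proof -
        have "z = pt (z$1) 1" using 3 by (simp add: vec2_eq_iff)
        then have "Xf \<phi>0 \<phi>1 z = Xf \<phi>0 \<phi>1 (pt (z$1) 1)" by (rule arg_cong)
        then show ?thesis by (simp only: Xf_top)
      qed
      moreover have "\<bar>Xf \<phi>0 \<phi>1 w - \<phi>1 (w$1)\<bar> \<le> (4*K^2+2) * (1 - w$2)"
        using Xf_near_top[OF wr(3,4,1,2)] by (simp add: pt_eta)
      moreover have "\<bar>\<phi>1 (w$1) - \<phi>1 (z$1)\<bar> \<le> K * \<bar>w$1 - z$1\<bar>"
        by (rule phi_lip[OF B1]) (use wr zr in auto)
      ultimately show "\<bar>Xf \<phi>0 \<phi>1 w - Xf \<phi>0 \<phi>1 z\<bar> \<le> (4*K^2+2) * (1 - w$2) + K * \<bar>w$1 - z$1\<bar>"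
        by linarith
    next
      show "continuous (at z within rect 1 1) (\<lambda>w. (4*K^2+2) * (1 - w$2) + K * \<bar>w$1 - z$1\<bar>)"
        by (intro continuous_intros)
    qed (use 3 in simp)
  qed
qed

lemma Xf_partials: assumes "0 < x" "x < 1" "0 < y" "y < 1"
  shows "\<exists>D. (Xf \<phi>0 \<phi>1 has_derivative D) (at (pt x y)) \<and>
     1/K^2 \<le> D (pt 1 0) \<and> D (pt 1 0) \<le> K^2 \<and> \<bar>D (pt 0 1)\<bar> \<le> 6*K^4"
proof -
  have K: "K \<ge> 1" by (rule K1'')
  obtain D where D: "(Xf \<phi>0 \<phi>1 has_derivative D) (at (pt x y))"
    using Xf_differentiable[OF B0 B1, of "pt x y"] assms by (auto simp: differentiable_def)
  define h where "h = hh y"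
  have hp: "0 < h" "h \<le> 1" using hh_pos[of y] hh_le[of y] assms by (auto simp: h_def)
  have d1: "((\<lambda>t. Xf \<phi>0 \<phi>1 (pt t y)) has_real_derivative D (pt 1 0)) (at x)" by (rule partial1[OF D])
  have d1': "((\<lambda>t. (1-y) * Sm \<phi>0 t h + y * Sm \<phi>1 t h) has_real_derivative
      (1-y) * Sx \<phi>0 x h + y * Sx \<phi>1 x h) (at x)"
    by (intro DERIV_add DERIV_cmult Sm_deriv_x[OF B0] Sm_deriv_x[OF B1]) (use hp assms in auto)
  have eq1: "(\<lambda>t. Xf \<phi>0 \<phi>1 (pt t y)) = (\<lambda>t. (1-y) * Sm \<phi>0 t h + y * Sm \<phi>1 t h)"
    by (simp add: Xf_def h_def)
  have e1: "D (pt 1 0) = (1-y) * Sx \<phi>0 x h + y * Sx \<phi>1 x h"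
    using d1 unfolding eq1 using d1' by (rule DERIV_unique)
  have s0: "1/K^2 \<le> Sx \<phi>0 x h \<and> Sx \<phi>0 x h \<le> K^2" by (rule Sx_bounds[OF B0 hp(1)])
  have s1: "1/K^2 \<le> Sx \<phi>1 x h \<and> Sx \<phi>1 x h \<le> K^2" by (rule Sx_bounds[OF B1 hp(1)])
  have lo: "(1-y) * (1/K^2) + y * (1/K^2) \<le> (1-y) * Sx \<phi>0 x h + y * Sx \<phi>1 x h"
    by (intro add_mono mult_left_mono) (use s0 s1 assms in auto)
  have hi: "(1-y) * Sx \<phi>0 x h + y * Sx \<phi>1 x h \<le> (1-y) * K^2 + y * K^2"
    by (intro add_mono mult_left_mono) (use s0 s1 assms in auto)
  have d2: "((\<lambda>t. Xf \<phi>0 \<phi>1 (pt x t)) has_real_derivative D (pt 0 1)) (at y)" by (rule partial2[OF D])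
  have c0: "((\<lambda>t. Sm \<phi>0 x (hh t)) has_real_derivative Sh \<phi>0 x (hh y) * (1 - 2*y)) (at y)"
    by (rule DERIV_chain2[OF Sm_deriv_h[OF B0] hh_deriv]) (use hp assms in \<open>auto simp: h_def\<close>)
  have c1: "((\<lambda>t. Sm \<phi>1 x (hh t)) has_real_derivative Sh \<phi>1 x (hh y) * (1 - 2*y)) (at y)"
    by (rule DERIV_chain2[OF Sm_deriv_h[OF B1] hh_deriv]) (use hp assms in \<open>auto simp: h_def\<close>)
  have d2': "((\<lambda>t. (1-t) * Sm \<phi>0 x (hh t) + t * Sm \<phi>1 x (hh t)) has_real_derivative
     ((1-y) * (Sh \<phi>0 x (hh y) * (1 - 2*y)) + (0-1) * Sm \<phi>0 x (hh y)) +
     (y * (Sh \<phi>1 x (hh y) * (1 - 2*y)) + 1 * Sm \<phi>1 x (hh y))) (at y)"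
    by (intro DERIV_add DERIV_mult' DERIV_diff DERIV_const DERIV_ident c0 c1)
  have eq2: "(\<lambda>t. Xf \<phi>0 \<phi>1 (pt x t)) = (\<lambda>t. (1-t) * Sm \<phi>0 x (hh t) + t * Sm \<phi>1 x (hh t))"
    by (simp add: Xf_def)
  have e2: "D (pt 0 1) = ((1-y) * (Sh \<phi>0 x h * (1 - 2*y)) + (0-1) * Sm \<phi>0 x h) +
     (y * (Sh \<phi>1 x h * (1 - 2*y)) + 1 * Sm \<phi>1 x h)"
    using d2 unfolding eq2 using d2' unfolding h_def by (rule DERIV_unique)
  have r0: "0 \<le> Sm \<phi>0 x h \<and> Sm \<phi>0 x h \<le> 1" by (rule Sm_range[OF B0]) (use assms hp in auto)
  have r1: "0 \<le> Sm \<phi>1 x h \<and> Sm \<phi>1 x h \<le> 1" by (rule Sm_range[OF B1]) (use assms hp in auto)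
  have q0: "\<bar>Sh \<phi>0 x h\<bar> \<le> 4*K^4" by (rule Sh_bound[OF B0]) (use assms hp in auto)
  have q1: "\<bar>Sh \<phi>1 x h\<bar> \<le> 4*K^4" by (rule Sh_bound[OF B1]) (use assms hp in auto)
  have y2: "\<bar>1 - 2*y\<bar> \<le> 1" using assms by auto
  have t0: "\<bar>(1-y) * (Sh \<phi>0 x h * (1 - 2*y))\<bar> \<le> (1-y) * (4*K^4 * 1)"
    unfolding abs_mult using assms q0 y2 by (intro mult_mono) (simp_all add: mult_mono)
  have t1: "\<bar>y * (Sh \<phi>1 x h * (1 - 2*y))\<bar> \<le> y * (4*K^4 * 1)"
    unfolding abs_mult using assms q1 y2 by (intro mult_mono) (simp_all add: mult_mono)
  have "\<bar>D (pt 0 1)\<bar> \<le> 1 + 1 + (1-y) * (4*K^4 * 1) + y * (4*K^4 * 1)"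
    unfolding e2 by (rule abs_combo[OF t0 t1 r0 r1])
  also have "\<dots> = 2 + 4*K^4" by (simp add: algebra_simps)
  also have "\<dots> \<le> 6*K^4" using one_le_power[OF K, of 4] by linarith
  finally have b2: "\<bar>D (pt 0 1)\<bar> \<le> 6*K^4" .
  have l1: "(1-y) * (1/K^2) + y * (1/K^2) = 1/K^2" by (simp add: add_divide_distrib[symmetric])
  have l2: "(1-y) * K^2 + y * K^2 = K^2" by (simp add: algebra_simps)
  show ?thesis using D e1 lo hi b2 l1 l2 by (intro exI[of _ D]) simp
qed

end

definition lin2 :: "real \<Rightarrow> real \<Rightarrow> real \<Rightarrow> real \<Rightarrow> real^2 \<Rightarrow> real^2" where
  "lin2 p q r s = (\<lambda>v. pt (p * v$1 + q * v$2) (r * v$1 + s * v$2))"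

lemma lin2_comp: "lin2 p q r s (lin2 p' q' r' s' v) =
   lin2 (p * p' + q * r') (p * q' + q * s') (r * p' + s * r') (r * q' + s * s') v"
  by (simp add: lin2_def algebra_simps)

lemma lin2_comp': "(\<lambda>v. lin2 p q r s (lin2 p' q' r' s' v)) =
   lin2 (p * p' + q * r') (p * q' + q * s') (r * p' + s * r') (r * q' + s * s')"
  by (rule HOL.ext) (rule lin2_comp)

lemma axis1: "axis 1 (1::real) = pt 1 0" and axis2: "axis 2 (1::real) = pt 0 1"
  by (simp_all add: vec2_eq_iff axis_def)

lemma det_lin2: "det (matrix (lin2 p q r s)) = p * s - q * r"
  by (simp add: det_2 matrix_def axis1 axis2 lin2_def)

lemma abs_nth_le_norm: "\<bar>(v::real^2) $ i\<bar> \<le> norm v"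
  using component_le_norm_cart[of v i] by simp

lemma onorm_lin2: "onorm (lin2 p q r s) \<le> \<bar>p\<bar> + \<bar>q\<bar> + \<bar>r\<bar> + \<bar>s\<bar>"
proof (rule onorm_le)
  fix v :: "real^2"
  have n: "\<bar>v$1\<bar> \<le> norm v" "\<bar>v$2\<bar> \<le> norm v" by (rule abs_nth_le_norm)+
  have "norm (lin2 p q r s v) \<le> \<bar>p * v$1 + q * v$2\<bar> + \<bar>r * v$1 + s * v$2\<bar>"
    unfolding lin2_def norm_pt by (rule sqrt_sum_squares_le_sum_abs)
  also have "\<dots> \<le> (\<bar>p\<bar> * \<bar>v$1\<bar> + \<bar>q\<bar> * \<bar>v$2\<bar>) + (\<bar>r\<bar> * \<bar>v$1\<bar> + \<bar>s\<bar> * \<bar>v$2\<bar>)"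
    by (intro add_mono) (simp_all add: abs_mult[symmetric] abs_triangle_ineq)
  also have "\<dots> \<le> (\<bar>p\<bar> * norm v + \<bar>q\<bar> * norm v) + (\<bar>r\<bar> * norm v + \<bar>s\<bar> * norm v)"
    by (intro add_mono mult_left_mono n) auto
  also have "\<dots> = (\<bar>p\<bar> + \<bar>q\<bar> + \<bar>r\<bar> + \<bar>s\<bar>) * norm v" by (simp add: algebra_simps)
  finally show "norm (lin2 p q r s v) \<le> (\<bar>p\<bar> + \<bar>q\<bar> + \<bar>r\<bar> + \<bar>s\<bar>) * norm v" .
qed

lemma linear_lin2: "linear (lin2 p q r s)"
  by (rule linearI) (simp_all add: lin2_def algebra_simps)

lemma pt_as_sum: "pt u w = u *\<^sub>R pt 1 0 + w *\<^sub>R pt 0 1"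
  by (simp add: vec2_eq_iff)

lemma has_derivative_pt:
  assumes "(f has_derivative f') (at z)" "(g has_derivative g') (at z)"
  shows "((\<lambda>z. pt (f z) (g z)) has_derivative (\<lambda>v. pt (f' v) (g' v))) (at z)"
proof -
  have "((\<lambda>z. f z *\<^sub>R pt 1 0 + g z *\<^sub>R pt 0 1) has_derivative (\<lambda>v. f' v *\<^sub>R pt 1 0 + g' v *\<^sub>R pt 0 1)) (at z)"
    by (rule has_derivative_add[OF has_derivative_scaleR_left[OF assms(1)] has_derivative_scaleR_left[OF assms(2)]])
  then show ?thesis by (simp only: pt_as_sum[symmetric])
qed

lemma ex_pt: obtains a c where "z = pt a c"
  using pt_eta[of z, symmetric] by blast

definition Hm :: "(real \<Rightarrow> real) \<Rightarrow> (real \<Rightarrow> real) \<Rightarrow> real^2 \<Rightarrow> real^2" where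
  "Hm \<phi>0 \<phi>1 z = pt (Xf \<phi>0 \<phi>1 z) (z$2)"

definition sw :: "real^2 \<Rightarrow> real^2" where "sw z = pt (z$2) (z$1)"

lemma sw_pt [simp]: "sw (pt x y) = pt y x" by (simp add: sw_def)
lemma sw_sw [simp]: "sw (sw z) = z" by (simp add: sw_def vec2_eq_iff)
lemma sw_rect [simp]: "sw z \<in> rect 1 1 \<longleftrightarrow> z \<in> rect 1 1" by (auto simp: sw_def rect_iff)
lemma sw_image: "sw ` rect 1 1 = rect 1 1"
proof
  show "sw ` rect 1 1 \<subseteq> rect 1 1" by auto
  show "rect 1 1 \<subseteq> sw ` rect 1 1"
  proof
    fix z assume "z \<in> rect 1 1"
    then have "sw z \<in> rect 1 1" by simp
    moreover have "z = sw (sw z)" by simp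
    ultimately show "z \<in> sw ` rect 1 1" by (rule rev_image_eqI)
  qed
qed
lemma sw_lin2: "sw = lin2 0 1 1 0" by (rule HOL.ext) (simp add: sw_def lin2_def)
lemma bl_lin2: "bounded_linear (lin2 p q r s)" using linear_lin2 by (rule linear_conv_bounded_linear[THEN iffD1])
lemma sw_cont: "continuous_on A sw" unfolding sw_lin2 by (rule linear_continuous_on[OF bl_lin2])
lemma sw_inj: "inj_on sw A"
proof (rule inj_onI)
  fix x y assume "sw x = sw y"
  then have "sw (sw x) = sw (sw y)" by (rule arg_cong)
  then show "x = y" by (simp only: sw_sw)
qed
lemma sw_deriv: "(sw has_derivative lin2 0 1 1 0) (at z)"
  unfolding sw_lin2 by (rule bounded_linear_imp_has_derivative[OF bl_lin2])

context fixes K \<phi>0 \<phi>1 assumes B0: "bil K \<phi>0" and B1: "bil K \<phi>1"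
begin

lemma Hm_bot: "Hm \<phi>0 \<phi>1 (pt x 0) = pt (\<phi>0 x) 0" by (simp add: Hm_def Xf_bot[OF B0 B1])
lemma Hm_top: "Hm \<phi>0 \<phi>1 (pt x 1) = pt (\<phi>1 x) 1" by (simp add: Hm_def Xf_top[OF B0 B1])
lemma Hm_left: "0 \<le> y \<Longrightarrow> y \<le> 1 \<Longrightarrow> Hm \<phi>0 \<phi>1 (pt 0 y) = pt 0 y" by (simp add: Hm_def Xf_left[OF B0 B1])
lemma Hm_right: "0 \<le> y \<Longrightarrow> y \<le> 1 \<Longrightarrow> Hm \<phi>0 \<phi>1 (pt 1 y) = pt 1 y" by (simp add: Hm_def Xf_right[OF B0 B1])

lemma Hm_cont: "continuous_on (rect 1 1) (Hm \<phi>0 \<phi>1)"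
proof -
  have "continuous_on (rect 1 1) (\<lambda>z. Xf \<phi>0 \<phi>1 z *\<^sub>R pt 1 0 + (z$2) *\<^sub>R pt 0 1)"
    by (rule continuous_on_add continuous_on_scaleR Xf_cont[OF B0 B1] continuous_on_const
       continuous_on_component continuous_on_id)+
  moreover have "Hm \<phi>0 \<phi>1 = (\<lambda>z. Xf \<phi>0 \<phi>1 z *\<^sub>R pt 1 0 + (z$2) *\<^sub>R pt 0 1)"
    by (rule HOL.ext) (simp only: Hm_def pt_as_sum[symmetric])
  ultimately show ?thesis by simp
qed

lemma Hm_maps: "z \<in> rect 1 1 \<Longrightarrow> Hm \<phi>0 \<phi>1 z \<in> rect 1 1"
proof -
  assume z: "z \<in> rect 1 1"
  obtain a c where zc: "z = pt a c" by (rule ex_pt)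
  have r: "0 \<le> a" "a \<le> 1" "0 \<le> c" "c \<le> 1" using z by (simp_all add: zc rect_iff)
  show ?thesis using Xf_range[OF B0 B1 r(3,4,1,2)] r by (simp add: zc Hm_def rect_iff)
qed

lemma Hm_onto: assumes "w \<in> rect 1 1" shows "\<exists>z \<in> rect 1 1. Hm \<phi>0 \<phi>1 z = w"
proof -
  have wr: "0 \<le> w$1" "w$1 \<le> 1" "0 \<le> w$2" "w$2 \<le> 1" using assms by (auto simp: rect_iff)
  have c: "continuous_on {0..1} (\<lambda>t. Xf \<phi>0 \<phi>1 (pt t (w$2)))"
  proof (rule continuous_on_compose2[OF Xf_cont[OF B0 B1]])
    show "continuous_on {0..1} (\<lambda>t. pt t (w$2))" unfolding pt_as_sum[of _ "w$2"] by (intro continuous_intros)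
    show "(\<lambda>t. pt t (w$2)) ` {0..1} \<subseteq> rect 1 1" using wr by (auto simp: rect_iff)
  qed
  obtain t where t: "0 \<le> t" "t \<le> 1" "Xf \<phi>0 \<phi>1 (pt t (w$2)) = w$1"
    using IVT'[of "\<lambda>t. Xf \<phi>0 \<phi>1 (pt t (w$2))" 0 "w$1" 1, OF _ _ _ c]
      Xf_left[OF B0 B1] Xf_right[OF B0 B1] wr by auto
  then show ?thesis using wr by (intro bexI[of _ "pt t (w$2)"]) (auto simp: Hm_def rect_iff vec2_eq_iff)
qed

lemma Hm_image: "Hm \<phi>0 \<phi>1 ` rect 1 1 = rect 1 1"
  using Hm_maps Hm_onto by blast

lemma Hm_pt: "Hm \<phi>0 \<phi>1 (pt a c) = pt (Xf \<phi>0 \<phi>1 (pt a c)) c"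
  by (simp add: Hm_def)

lemma Hm_inj: "inj_on (Hm \<phi>0 \<phi>1) (rect 1 1)"
proof (rule inj_onI)
  fix z w assume z: "z \<in> rect 1 1" and w: "w \<in> rect 1 1" and e: "Hm \<phi>0 \<phi>1 z = Hm \<phi>0 \<phi>1 w"
  obtain a c where zc: "z = pt a c" by (rule ex_pt)
  obtain b d where wd: "w = pt b d" by (rule ex_pt)
  have r: "0 \<le> a" "a \<le> 1" "0 \<le> c" "c \<le> 1" "0 \<le> b" "b \<le> 1" "0 \<le> d" "d \<le> 1"
    using z w by (auto simp: rect_iff zc wd)
  have e': "pt (Xf \<phi>0 \<phi>1 (pt a c)) c = pt (Xf \<phi>0 \<phi>1 (pt b d)) d"
    using e by (simp only: zc wd Hm_pt)
  have ee: "Xf \<phi>0 \<phi>1 (pt a c) = Xf \<phi>0 \<phi>1 (pt b d) \<and> c = d" using e' by (rule pt_eq_iff[THEN iffD1])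
  have y: "c = d" using ee by blast
  have x0: "Xf \<phi>0 \<phi>1 (pt a c) = Xf \<phi>0 \<phi>1 (pt b d)" using ee by blast
  have x: "Xf \<phi>0 \<phi>1 (pt a c) = Xf \<phi>0 \<phi>1 (pt b c)" using x0 by (simp only: y)
  have "a = b"
  proof (rule ccontr)
    assume "a \<noteq> b"
    then consider "a < b" | "b < a" by linarith
    then show False
    proof cases
      case 1 then show False using Xf_mono[OF B0 B1, of c a b] x r by simp
    next
      case 2 then show False using Xf_mono[OF B0 B1, of c b a] x r by simp
    qed
  qed
  then show "z = w" using y by (simp add: zc wd)
qed

lemma Hm_interior: assumes "0 < z$1" "z$1 < 1" "0 < z$2" "z$2 < 1"
  shows "0 < Hm \<phi>0 \<phi>1 z $ 1 \<and> Hm \<phi>0 \<phi>1 z $ 1 < 1 \<and> 0 < Hm \<phi>0 \<phi>1 z $ 2 \<and> Hm \<phi>0 \<phi>1 z $ 2 < 1"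
proof -
  obtain a c where zc: "z = pt a c" by (rule ex_pt)
  have r: "0 < a" "a < 1" "0 < c" "c < 1" using assms by (simp_all add: zc)
  have "Xf \<phi>0 \<phi>1 (pt 0 c) < Xf \<phi>0 \<phi>1 (pt a c)" by (rule Xf_mono[OF B0 B1]) (use r in auto)
  moreover have "Xf \<phi>0 \<phi>1 (pt a c) < Xf \<phi>0 \<phi>1 (pt 1 c)" by (rule Xf_mono[OF B0 B1]) (use r in auto)
  ultimately show ?thesis using Xf_left[OF B0 B1, of c] Xf_right[OF B0 B1, of c] r by (simp add: zc Hm_pt)
qed

lemma Hm_deriv: assumes "0 < z$1" "z$1 < 1" "0 < z$2" "z$2 < 1"
  shows "\<exists>a b. (Hm \<phi>0 \<phi>1 has_derivative lin2 a b 0 1) (at z) \<and> 1/K^2 \<le> a \<and> a \<le> K^2 \<and> \<bar>b\<bar> \<le> 6*K^4"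
proof -
  obtain a c where zc: "z = pt a c" by (rule ex_pt)
  have r: "0 < a" "a < 1" "0 < c" "c < 1" using assms by (simp_all add: zc)
  obtain D where D: "(Xf \<phi>0 \<phi>1 has_derivative D) (at (pt a c))"
     "1/K^2 \<le> D (pt 1 0)" "D (pt 1 0) \<le> K^2" "\<bar>D (pt 0 1)\<bar> \<le> 6*K^4"
    using Xf_partials[OF B0 B1 r] by blast
  have lin: "linear D" using D(1) has_derivative_linear by blast
  have y: "((\<lambda>z::real^2. z$2) has_derivative (\<lambda>v. v$2)) (at (pt a c))"
    by (rule bounded_linear_imp_has_derivative[OF bounded_linear_vec_nth])
  have "(Hm \<phi>0 \<phi>1 has_derivative (\<lambda>v. pt (D v) (v$2))) (at (pt a c))"
    unfolding Hm_def by (rule has_derivative_pt[OF D(1) y])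
  moreover have "(\<lambda>v. pt (D v) (v$2)) = lin2 (D (pt 1 0)) (D (pt 0 1)) 0 1"
  proof (rule HOL.ext)
    fix v
    have "D v = D (pt 1 0) * v$1 + D (pt 0 1) * v$2" by (rule lin2_repr[OF lin])
    then show "pt (D v) (v$2) = lin2 (D (pt 1 0)) (D (pt 0 1)) 0 1 v"
      by (simp add: lin2_def)
  qed
  ultimately have "(Hm \<phi>0 \<phi>1 has_derivative lin2 (D (pt 1 0)) (D (pt 0 1)) 0 1) (at z)"
    by (simp add: zc)
  then show ?thesis using D(2-4) by blast
qed

end

definition Gm :: "(real \<Rightarrow> real) \<Rightarrow> (real \<Rightarrow> real) \<Rightarrow> (real \<Rightarrow> real) \<Rightarrow> (real \<Rightarrow> real) \<Rightarrow> real^2 \<Rightarrow> real^2" where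
  "Gm \<phi>b \<phi>t \<psi>l \<psi>r = (\<lambda>z. sw (Hm \<psi>l \<psi>r (sw (Hm \<phi>b \<phi>t z))))"

lemma K_pow_le: assumes "(K::real) \<ge> 1" "m \<le> n" shows "K^m \<le> K^n"
  by (rule power_increasing[OF assms(2,1)])

context fixes K \<phi>b \<phi>t \<psi>l \<psi>r
  assumes Bb: "bil K \<phi>b" and Bt: "bil K \<phi>t" and Bl: "bil K \<psi>l" and Br: "bil K \<psi>r"
begin

lemma G_comp: "Gm \<phi>b \<phi>t \<psi>l \<psi>r = sw \<circ> Hm \<psi>l \<psi>r \<circ> sw \<circ> Hm \<phi>b \<phi>t"
  by (simp add: Gm_def o_def)

lemma im1: "(sw \<circ> Hm \<phi>b \<phi>t) ` rect 1 1 = rect 1 1"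
proof -
  have "(sw \<circ> Hm \<phi>b \<phi>t) ` rect 1 1 = sw ` (Hm \<phi>b \<phi>t ` rect 1 1)" by (rule image_comp[symmetric])
  also have "\<dots> = rect 1 1" by (simp only: Hm_image[OF Bb Bt] sw_image)
  finally show ?thesis .
qed

lemma im2: "(sw \<circ> (Hm \<psi>l \<psi>r \<circ> (sw \<circ> Hm \<phi>b \<phi>t))) ` rect 1 1 = rect 1 1"
proof -
  have "(sw \<circ> (Hm \<psi>l \<psi>r \<circ> (sw \<circ> Hm \<phi>b \<phi>t))) ` rect 1 1 = sw ` (Hm \<psi>l \<psi>r ` ((sw \<circ> Hm \<phi>b \<phi>t) ` rect 1 1))"
    by (simp only: image_comp[symmetric])
  also have "\<dots> = rect 1 1" by (simp only: im1 Hm_image[OF Bl Br] sw_image)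
  finally show ?thesis .
qed

lemma G_cont: "continuous_on (rect 1 1) (Gm \<phi>b \<phi>t \<psi>l \<psi>r)"
proof -
  have "continuous_on (rect 1 1) (sw \<circ> Hm \<phi>b \<phi>t)"
    by (rule continuous_on_compose[OF Hm_cont[OF Bb Bt]]) (rule sw_cont)
  moreover note im1
  ultimately have "continuous_on (rect 1 1) (Hm \<psi>l \<psi>r \<circ> (sw \<circ> Hm \<phi>b \<phi>t))"
    using continuous_on_compose Hm_cont[OF Bl Br] by metis
  then have "continuous_on (rect 1 1) (sw \<circ> (Hm \<psi>l \<psi>r \<circ> (sw \<circ> Hm \<phi>b \<phi>t)))"
    by (rule continuous_on_compose) (rule sw_cont)
  then show ?thesis by (simp add: G_comp o_assoc)
qed

lemma G_image: "Gm \<phi>b \<phi>t \<psi>l \<psi>r ` rect 1 1 = rect 1 1"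
  using im2 by (simp only: G_comp o_assoc)

lemma G_inj: "inj_on (Gm \<phi>b \<phi>t \<psi>l \<psi>r) (rect 1 1)"
proof -
  have i1: "inj_on (sw \<circ> Hm \<phi>b \<phi>t) (rect 1 1)"
    by (rule comp_inj_on[OF Hm_inj[OF Bb Bt] sw_inj])
  have i2: "inj_on (Hm \<psi>l \<psi>r \<circ> (sw \<circ> Hm \<phi>b \<phi>t)) (rect 1 1)"
    by (rule comp_inj_on[OF i1]) (simp only: im1 Hm_inj[OF Bl Br])
  have i3: "inj_on (sw \<circ> (Hm \<psi>l \<psi>r \<circ> (sw \<circ> Hm \<phi>b \<phi>t))) (rect 1 1)"
    by (rule comp_inj_on[OF i2 sw_inj])
  then show ?thesis by (simp add: G_comp o_assoc)
qed

lemma G_bot: "0 \<le> s \<Longrightarrow> s \<le> 1 \<Longrightarrow> Gm \<phi>b \<phi>t \<psi>l \<psi>r (pt s 0) = pt (\<phi>b s) 0"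
  using phi_range[OF Bb, of s] by (simp add: Gm_def Hm_bot[OF Bb Bt] Hm_left[OF Bl Br])
lemma G_top: "0 \<le> s \<Longrightarrow> s \<le> 1 \<Longrightarrow> Gm \<phi>b \<phi>t \<psi>l \<psi>r (pt s 1) = pt (\<phi>t s) 1"
  using phi_range[OF Bt, of s] by (simp add: Gm_def Hm_top[OF Bb Bt] Hm_right[OF Bl Br])
lemma G_left: "0 \<le> s \<Longrightarrow> s \<le> 1 \<Longrightarrow> Gm \<phi>b \<phi>t \<psi>l \<psi>r (pt 0 s) = pt 0 (\<psi>l s)"
  by (simp add: Gm_def Hm_left[OF Bb Bt] Hm_bot[OF Bl Br])
lemma G_right: "0 \<le> s \<Longrightarrow> s \<le> 1 \<Longrightarrow> Gm \<phi>b \<phi>t \<psi>l \<psi>r (pt 1 s) = pt 1 (\<psi>r s)"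
  by (simp add: Gm_def Hm_right[OF Bb Bt] Hm_top[OF Bl Br])

lemma G_deriv: assumes "0 < z$1" "z$1 < 1" "0 < z$2" "z$2 < 1"
  shows "\<exists>p q r s. (Gm \<phi>b \<phi>t \<psi>l \<psi>r has_derivative lin2 p q r s) (at z) \<and>
     \<bar>p\<bar> + \<bar>q\<bar> + \<bar>r\<bar> + \<bar>s\<bar> \<le> 50 * K^8 \<and> 1/K^4 \<le> p * s - q * r"
proof -
  have K: "K \<ge> 1" using K1[OF Bb] .
  obtain a b where ab: "(Hm \<phi>b \<phi>t has_derivative lin2 a b 0 1) (at z)" "1/K^2 \<le> a" "a \<le> K^2" "\<bar>b\<bar> \<le> 6*K^4"
    using Hm_deriv[OF Bb Bt assms] by blast
  define w where "w = sw (Hm \<phi>b \<phi>t z)"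
  have wi: "0 < w$1" "w$1 < 1" "0 < w$2" "w$2 < 1"
    using Hm_interior[OF Bb Bt assms] by (auto simp: w_def sw_def)
  obtain a' b' where ab': "(Hm \<psi>l \<psi>r has_derivative lin2 a' b' 0 1) (at w)" "1/K^2 \<le> a'" "a' \<le> K^2" "\<bar>b'\<bar> \<le> 6*K^4"
    using Hm_deriv[OF Bl Br wi] by blast
  have d1: "((\<lambda>z. sw (Hm \<phi>b \<phi>t z)) has_derivative (\<lambda>v. lin2 0 1 1 0 (lin2 a b 0 1 v))) (at z)"
    by (rule has_derivative_compose[OF ab(1) sw_deriv])
  have d2: "((\<lambda>z. Hm \<psi>l \<psi>r (sw (Hm \<phi>b \<phi>t z))) has_derivative
      (\<lambda>v. lin2 a' b' 0 1 (lin2 0 1 1 0 (lin2 a b 0 1 v)))) (at z)"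
    by (rule has_derivative_compose[OF d1]) (use ab'(1) in \<open>simp add: w_def\<close>)
  have d3: "(Gm \<phi>b \<phi>t \<psi>l \<psi>r has_derivative
      (\<lambda>v. lin2 0 1 1 0 (lin2 a' b' 0 1 (lin2 0 1 1 0 (lin2 a b 0 1 v))))) (at z)"
    unfolding Gm_def by (rule has_derivative_compose[OF d2 sw_deriv])
  have eq: "(\<lambda>v. lin2 0 1 1 0 (lin2 a' b' 0 1 (lin2 0 1 1 0 (lin2 a b 0 1 v)))) = lin2 a b (b' * a) (a' + b' * b)"
    by (rule HOL.ext) (simp add: lin2_def algebra_simps)
  have pa: "a > 0" using ab(2) K by (smt (verit) divide_pos_pos zero_less_power)
  have pa': "a' > 0" using ab'(2) K by (smt (verit) divide_pos_pos zero_less_power)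
  have det: "a * (a' + b' * b) - b * (b' * a) = a * a'" by (simp add: algebra_simps)
  have "1/K^4 = (1/K^2) * (1/K^2)" by (simp add: power2_eq_square power4_eq_xxxx)
  also have "\<dots> \<le> a * a'" by (rule mult_mono) (use ab ab' pa in auto)
  finally have dl: "1/K^4 \<le> a * (a' + b' * b) - b * (b' * a)" using det by simp
  have e3: "\<bar>b' * a\<bar> \<le> 6*K^4 * K^2" unfolding abs_mult by (rule mult_mono) (use ab ab' pa in auto)
  have e4: "\<bar>b' * b\<bar> \<le> 6*K^4 * (6*K^4)" unfolding abs_mult by (rule mult_mono) (use ab ab' in auto)
  have k2: "K^2 \<le> K^8" "K^4 \<le> K^8" by (rule K_pow_le[OF K]; simp)+
  have k6: "K^4 * K^2 \<le> K^8" using K_pow_le[OF K, of 6 8] by (simp add: power_add[symmetric])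
  have k8: "K^4 * K^4 = K^8" by (simp add: power_add[symmetric])
  have "\<bar>a\<bar> + \<bar>b\<bar> + \<bar>b' * a\<bar> + \<bar>a' + b' * b\<bar> \<le> K^2 + 6*K^4 + 6*K^4 * K^2 + (K^2 + 6*K^4 * (6*K^4))"
    using ab ab' pa pa' e3 e4 abs_triangle_ineq[of a' "b' * b"] by linarith
  also have "\<dots> \<le> 50 * K^8" using k2 k6 k8 by (simp add: algebra_simps)
  finally show ?thesis using d3 dl unfolding eq by blast
qed

end

definition ed :: "real \<Rightarrow> real \<Rightarrow> nat \<Rightarrow> (real^2) set" where
  "ed w h i = (if i = 0 then closed_segment (pt 0 0) (pt w 0) else if i = 1 then closed_segment (pt w 0) (pt w h)
     else if i = 2 then closed_segment (pt w h) (pt 0 h) else closed_segment (pt 0 h) (pt 0 0))"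

lemma rect_edges_ed: "rect_edges w h = {ed w h 0, ed w h 1, ed w h 2, ed w h 3}"
  by (simp add: rect_edges_def ed_def)

context fixes w h :: real assumes wh: "0 < w" "0 < h"
begin

lemma ed0: "z \<in> ed w h 0 \<longleftrightarrow> z$2 = 0 \<and> 0 \<le> z$1 \<and> z$1 \<le> w"
  using wh by (simp add: ed_def seg_h)
lemma ed1: "z \<in> ed w h 1 \<longleftrightarrow> z$1 = w \<and> 0 \<le> z$2 \<and> z$2 \<le> h"
  using wh by (simp add: ed_def seg_v)
lemma ed2: "z \<in> ed w h 2 \<longleftrightarrow> z$2 = h \<and> 0 \<le> z$1 \<and> z$1 \<le> w"
  using wh by (auto simp: ed_def seg_h)
lemma ed3: "z \<in> ed w h 3 \<longleftrightarrow> z$1 = 0 \<and> 0 \<le> z$2 \<and> z$2 \<le> h"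
  using wh by (auto simp: ed_def seg_v)

lemma ed1': "z \<in> ed w h (Suc 0) \<longleftrightarrow> z$1 = w \<and> 0 \<le> z$2 \<and> z$2 \<le> h"
  using ed1 by simp

lemmas ed_iff = ed0 ed1 ed1' ed2 ed3

lemma frontier_ed: "frontier (rect w h) = ed w h 0 \<union> ed w h 1 \<union> ed w h 2 \<union> ed w h 3"
proof -
  have "z \<in> frontier (rect w h) \<longleftrightarrow> z \<in> ed w h 0 \<or> z \<in> ed w h 1 \<or> z \<in> ed w h 2 \<or> z \<in> ed w h 3" for z
    unfolding frontier_rect[OF wh] mem_Collect_eq rect_iff ed0 ed1 ed2 ed3 using wh by smt
  then show ?thesis by blast
qed

lemma ed_sub: "i < 4 \<Longrightarrow> ed w h i \<subseteq> frontier (rect w h)"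
  unfolding frontier_ed by (auto simp: less_Suc_eq numeral_eq_Suc)

lemma ed_disj: "ed w h 0 \<inter> ed w h 2 = {}" "ed w h 1 \<inter> ed w h 3 = {}"
  using wh by (auto simp: ed_iff)

lemma ed_corner: "pt 0 0 \<in> ed w h 0" "pt 0 0 \<in> ed w h 3" "pt w 0 \<in> ed w h 0" "pt w 0 \<in> ed w h 1"
  "pt w h \<in> ed w h 1" "pt w h \<in> ed w h 2" "pt 0 h \<in> ed w h 2" "pt 0 h \<in> ed w h 3"
  using wh by (auto simp: ed_iff)

lemma ed_distinct: "ed w h 0 \<noteq> ed w h 1" "ed w h 0 \<noteq> ed w h 2" "ed w h 0 \<noteq> ed w h 3"
   "ed w h 1 \<noteq> ed w h 2" "ed w h 1 \<noteq> ed w h 3" "ed w h 2 \<noteq> ed w h 3"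
proof -
  have "pt (w/2) 0 \<in> ed w h 0" "pt (w/2) 0 \<notin> ed w h 1" "pt (w/2) 0 \<notin> ed w h 2" "pt (w/2) 0 \<notin> ed w h 3"
    "pt w (h/2) \<in> ed w h 1" "pt w (h/2) \<notin> ed w h 2" "pt w (h/2) \<notin> ed w h 3"
    "pt (w/2) h \<in> ed w h 2" "pt (w/2) h \<notin> ed w h 3"
    using wh by (auto simp: ed_iff)
  then show "ed w h 0 \<noteq> ed w h 1" "ed w h 0 \<noteq> ed w h 2" "ed w h 0 \<noteq> ed w h 3"
   "ed w h 1 \<noteq> ed w h 2" "ed w h 1 \<noteq> ed w h 3" "ed w h 2 \<noteq> ed w h 3" by metis+
qed

end

lemma D4_cases:
  fixes X0 X1 X2 X3 A0 A1 A2 A3 :: "'a set"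
  assumes "X0 \<in> {A0,A1,A2,A3}" "X1 \<in> {A0,A1,A2,A3}" "X2 \<in> {A0,A1,A2,A3}" "X3 \<in> {A0,A1,A2,A3}"
    and "A0 \<noteq> A1" "A0 \<noteq> A2" "A0 \<noteq> A3" "A1 \<noteq> A2" "A1 \<noteq> A3" "A2 \<noteq> A3"
    and "X0 \<noteq> X1" "X0 \<noteq> X2" "X0 \<noteq> X3" "X1 \<noteq> X2" "X1 \<noteq> X3" "X2 \<noteq> X3"
    and "A0 \<inter> A2 = {}" "A1 \<inter> A3 = {}"
    and "X0 \<inter> X1 \<noteq> {}" "X1 \<inter> X2 \<noteq> {}" "X2 \<inter> X3 \<noteq> {}" "X3 \<inter> X0 \<noteq> {}"
  shows "(X0 = A0 \<and> X1 = A1 \<and> X2 = A2 \<and> X3 = A3) \<or> (X0 = A1 \<and> X1 = A2 \<and> X2 = A3 \<and> X3 = A0) \<or>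
         (X0 = A2 \<and> X1 = A3 \<and> X2 = A0 \<and> X3 = A1) \<or> (X0 = A3 \<and> X1 = A0 \<and> X2 = A1 \<and> X3 = A2) \<or>
         (X0 = A0 \<and> X1 = A3 \<and> X2 = A2 \<and> X3 = A1) \<or> (X0 = A1 \<and> X1 = A0 \<and> X2 = A3 \<and> X3 = A2) \<or>
         (X0 = A2 \<and> X1 = A1 \<and> X2 = A0 \<and> X3 = A3) \<or> (X0 = A3 \<and> X1 = A2 \<and> X2 = A1 \<and> X3 = A0)"
proof -
  have c: "A2 \<inter> A0 = {}" "A3 \<inter> A1 = {}" using assms(17,18) by blast+
  from assms(1) show ?thesis
  proof (elim insertE emptyE)
    assume x0: "X0 = A0"
    from assms(2) show ?thesis
    proof (elim insertE emptyE)
      assume "X1 = A0" then show ?thesis using x0 assms by simp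
    next
      assume x1: "X1 = A1"
      from assms(3) show ?thesis
      proof (elim insertE emptyE)
        assume x2: "X2 = A2" show ?thesis using assms(4) x0 x1 x2 assms(5-22) c by auto
      qed (use x0 x1 assms c in auto)
    next
      assume "X1 = A2" then show ?thesis using x0 assms by simp
    next
      assume x1: "X1 = A3"
      from assms(3) show ?thesis
      proof (elim insertE emptyE)
        assume x2: "X2 = A2" show ?thesis using assms(4) x0 x1 x2 assms(5-22) c by auto
      qed (use x0 x1 assms c in auto)
    qed
  next
    assume x0: "X0 = A1"
    from assms(2) show ?thesis
    proof (elim insertE emptyE)
      assume x1: "X1 = A0"
      from assms(3) show ?thesis
      proof (elim insertE emptyE)
        assume x2: "X2 = A3" show ?thesis using assms(4) x0 x1 x2 assms(5-22) c by auto
      qed (use x0 x1 assms c in auto)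
    next
      assume "X1 = A1" then show ?thesis using x0 assms by simp
    next
      assume x1: "X1 = A2"
      from assms(3) show ?thesis
      proof (elim insertE emptyE)
        assume x2: "X2 = A3" show ?thesis using assms(4) x0 x1 x2 assms(5-22) c by auto
      qed (use x0 x1 assms c in auto)
    next
      assume "X1 = A3" then show ?thesis using x0 assms c by simp
    qed
  next
    assume x0: "X0 = A2"
    from assms(2) show ?thesis
    proof (elim insertE emptyE)
      assume "X1 = A0" then show ?thesis using x0 assms c by simp
    next
      assume x1: "X1 = A1"
      from assms(3) show ?thesis
      proof (elim insertE emptyE)
        assume x2: "X2 = A0" show ?thesis using assms(4) x0 x1 x2 assms(5-22) c by auto
      qed (use x0 x1 assms c in auto)
    next
      assume "X1 = A2" then show ?thesis using x0 assms by simp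
    next
      assume x1: "X1 = A3"
      from assms(3) show ?thesis
      proof (elim insertE emptyE)
        assume x2: "X2 = A0" show ?thesis using assms(4) x0 x1 x2 assms(5-22) c by auto
      qed (use x0 x1 assms c in auto)
    qed
  next
    assume x0: "X0 = A3"
    from assms(2) show ?thesis
    proof (elim insertE emptyE)
      assume x1: "X1 = A0"
      from assms(3) show ?thesis
      proof (elim insertE emptyE)
        assume x2: "X2 = A1" show ?thesis using assms(4) x0 x1 x2 assms(5-22) c by auto
      qed (use x0 x1 assms c in auto)
    next
      assume "X1 = A1" then show ?thesis using x0 assms c by simp
    next
      assume x1: "X1 = A2"
      from assms(3) show ?thesis
      proof (elim insertE emptyE)
        assume x2: "X2 = A1" show ?thesis using assms(4) x0 x1 x2 assms(5-22) c by auto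
      qed (use x0 x1 assms c in auto)
    next
      assume "X1 = A3" then show ?thesis using x0 assms by simp
    qed
  qed
qed


definition aff :: "real \<Rightarrow> real \<Rightarrow> real \<Rightarrow> real \<Rightarrow> real \<Rightarrow> real \<Rightarrow> real^2 \<Rightarrow> real^2" where
  "aff \<alpha> \<beta> \<gamma> \<delta> c1 c2 = (\<lambda>z. lin2 \<alpha> \<beta> \<gamma> \<delta> z + pt c1 c2)"

definition affinv :: "real \<Rightarrow> real \<Rightarrow> real \<Rightarrow> real \<Rightarrow> real \<Rightarrow> real \<Rightarrow> real^2 \<Rightarrow> real^2" where
  "affinv \<alpha> \<beta> \<gamma> \<delta> c1 c2 = (\<lambda>w. lin2 (\<delta>/(\<alpha>*\<delta>-\<beta>*\<gamma>)) (-\<beta>/(\<alpha>*\<delta>-\<beta>*\<gamma>)) (-\<gamma>/(\<alpha>*\<delta>-\<beta>*\<gamma>)) (\<alpha>/(\<alpha>*\<delta>-\<beta>*\<gamma>)) (w - pt c1 c2))"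

lemma aff_pt: "aff \<alpha> \<beta> \<gamma> \<delta> c1 c2 (pt x y) = pt (\<alpha> * x + \<beta> * y + c1) (\<gamma> * x + \<delta> * y + c2)"
  by (simp add: aff_def lin2_def)

lemma lin2_id: "lin2 1 0 0 1 z = z" by (simp add: lin2_def vec2_eq_iff)

lemma affinv_aff: "\<alpha>*\<delta>-\<beta>*\<gamma> \<noteq> 0 \<Longrightarrow> affinv \<alpha> \<beta> \<gamma> \<delta> c1 c2 (aff \<alpha> \<beta> \<gamma> \<delta> c1 c2 z) = z"
proof -
  assume D: "\<alpha>*\<delta>-\<beta>*\<gamma> \<noteq> 0"
  define D' where "D' = \<alpha>*\<delta>-\<beta>*\<gamma>"
  have D0: "D' \<noteq> 0" using D by (simp add: D'_def)
  have dd: "D'/D' = 1" using D0 by simp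
  have e: "\<delta>/D' * \<alpha> + -\<beta>/D' * \<gamma> = 1" "\<delta>/D' * \<beta> + -\<beta>/D' * \<delta> = 0"
    "-\<gamma>/D' * \<alpha> + \<alpha>/D' * \<gamma> = 0" "-\<gamma>/D' * \<beta> + \<alpha>/D' * \<delta> = 1"
  proof -
    have "\<delta>/D' * \<alpha> + -\<beta>/D' * \<gamma> = (\<alpha>*\<delta>-\<beta>*\<gamma>)/D'" by (simp add: diff_divide_distrib mult.commute)
    then show "\<delta>/D' * \<alpha> + -\<beta>/D' * \<gamma> = 1" using dd by (simp add: D'_def)
    have "-\<gamma>/D' * \<beta> + \<alpha>/D' * \<delta> = (\<alpha>*\<delta>-\<beta>*\<gamma>)/D'" by (simp add: diff_divide_distrib mult.commute)
    then show "-\<gamma>/D' * \<beta> + \<alpha>/D' * \<delta> = 1" using dd by (simp add: D'_def)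
  qed (simp_all add: mult.commute)
  have "affinv \<alpha> \<beta> \<gamma> \<delta> c1 c2 (aff \<alpha> \<beta> \<gamma> \<delta> c1 c2 z) = lin2 (\<delta>/D') (-\<beta>/D') (-\<gamma>/D') (\<alpha>/D') (lin2 \<alpha> \<beta> \<gamma> \<delta> z)"
    unfolding aff_def affinv_def D'_def by (simp only: add_diff_cancel_right')
  also have "\<dots> = z" unfolding lin2_comp e by (rule lin2_id)
  finally show ?thesis .
qed

lemma aff_affinv: "\<alpha>*\<delta>-\<beta>*\<gamma> \<noteq> 0 \<Longrightarrow> aff \<alpha> \<beta> \<gamma> \<delta> c1 c2 (affinv \<alpha> \<beta> \<gamma> \<delta> c1 c2 w) = w"
proof -
  assume D: "\<alpha>*\<delta>-\<beta>*\<gamma> \<noteq> 0"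
  define D' where "D' = \<alpha>*\<delta>-\<beta>*\<gamma>"
  have D0: "D' \<noteq> 0" using D by (simp add: D'_def)
  have dd: "D'/D' = 1" using D0 by simp
  have e: "\<alpha> * (\<delta>/D') + \<beta> * (-\<gamma>/D') = 1" "\<alpha> * (-\<beta>/D') + \<beta> * (\<alpha>/D') = 0"
    "\<gamma> * (\<delta>/D') + \<delta> * (-\<gamma>/D') = 0" "\<gamma> * (-\<beta>/D') + \<delta> * (\<alpha>/D') = 1"
  proof -
    have "\<alpha> * (\<delta>/D') + \<beta> * (-\<gamma>/D') = (\<alpha>*\<delta>-\<beta>*\<gamma>)/D'" by (simp add: diff_divide_distrib)
    then show "\<alpha> * (\<delta>/D') + \<beta> * (-\<gamma>/D') = 1" using dd by (simp add: D'_def)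
    have "\<gamma> * (-\<beta>/D') + \<delta> * (\<alpha>/D') = (\<alpha>*\<delta>-\<beta>*\<gamma>)/D'" by (simp add: diff_divide_distrib mult.commute)
    then show "\<gamma> * (-\<beta>/D') + \<delta> * (\<alpha>/D') = 1" using dd by (simp add: D'_def)
  qed (simp_all add: mult.commute)
  have "aff \<alpha> \<beta> \<gamma> \<delta> c1 c2 (affinv \<alpha> \<beta> \<gamma> \<delta> c1 c2 w) = lin2 \<alpha> \<beta> \<gamma> \<delta> (lin2 (\<delta>/D') (-\<beta>/D') (-\<gamma>/D') (\<alpha>/D') (w - pt c1 c2)) + pt c1 c2"
    unfolding aff_def affinv_def D'_def by (rule refl)
  also have "\<dots> = w" unfolding lin2_comp e lin2_id by simp
  finally show ?thesis .
qed

lemma aff_inj: "\<alpha>*\<delta>-\<beta>*\<gamma> \<noteq> 0 \<Longrightarrow> inj_on (aff \<alpha> \<beta> \<gamma> \<delta> c1 c2) A"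
  by (metis affinv_aff inj_onI)

lemma aff_seg: "aff \<alpha> \<beta> \<gamma> \<delta> c1 c2 ` closed_segment u v = closed_segment (aff \<alpha> \<beta> \<gamma> \<delta> c1 c2 u) (aff \<alpha> \<beta> \<gamma> \<delta> c1 c2 v)"
proof -
  have "closed_segment (aff \<alpha> \<beta> \<gamma> \<delta> c1 c2 u) (aff \<alpha> \<beta> \<gamma> \<delta> c1 c2 v) =
     closed_segment (pt c1 c2 + lin2 \<alpha> \<beta> \<gamma> \<delta> u) (pt c1 c2 + lin2 \<alpha> \<beta> \<gamma> \<delta> v)"
    by (simp add: aff_def add.commute)
  also have "\<dots> = (\<lambda>x. pt c1 c2 + x) ` closed_segment (lin2 \<alpha> \<beta> \<gamma> \<delta> u) (lin2 \<alpha> \<beta> \<gamma> \<delta> v)"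
    by (rule closed_segment_translation)
  also have "closed_segment (lin2 \<alpha> \<beta> \<gamma> \<delta> u) (lin2 \<alpha> \<beta> \<gamma> \<delta> v) = lin2 \<alpha> \<beta> \<gamma> \<delta> ` closed_segment u v"
    by (rule closed_segment_linear_image[OF linear_lin2])
  finally show ?thesis by (simp add: image_image aff_def add.commute)
qed

lemma aff_cont: "continuous_on A (aff \<alpha> \<beta> \<gamma> \<delta> c1 c2)"
  unfolding aff_def by (intro continuous_on_add linear_continuous_on[OF bl_lin2] continuous_on_const)

lemma aff_deriv: "(aff \<alpha> \<beta> \<gamma> \<delta> c1 c2 has_derivative lin2 \<alpha> \<beta> \<gamma> \<delta>) (at z)"
proof -
  have "((\<lambda>z. lin2 \<alpha> \<beta> \<gamma> \<delta> z + pt c1 c2) has_derivative (\<lambda>v. lin2 \<alpha> \<beta> \<gamma> \<delta> v + 0)) (at z)"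
    by (rule has_derivative_add[OF bounded_linear_imp_has_derivative[OF bl_lin2] has_derivative_const])
  moreover have "(\<lambda>v. lin2 \<alpha> \<beta> \<gamma> \<delta> v + 0) = lin2 \<alpha> \<beta> \<gamma> \<delta>" by (rule HOL.ext) (simp add: vec2_eq_iff)
  ultimately show ?thesis unfolding aff_def by (simp only:)
qed

lemma aff_dist: "dist (aff \<alpha> \<beta> \<gamma> \<delta> c1 c2 u) (aff \<alpha> \<beta> \<gamma> \<delta> c1 c2 v) = norm (lin2 \<alpha> \<beta> \<gamma> \<delta> (u - v))"
proof -
  have "aff \<alpha> \<beta> \<gamma> \<delta> c1 c2 u - aff \<alpha> \<beta> \<gamma> \<delta> c1 c2 v = lin2 \<alpha> \<beta> \<gamma> \<delta> (u - v)"
    by (simp add: aff_def lin2_def vec2_eq_iff algebra_simps)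
  then show ?thesis by (simp add: dist_norm)
qed

lemma norm_lin2_h: "norm (lin2 \<alpha> \<beta> \<gamma> \<delta> (pt d 0)) = \<bar>d\<bar> * sqrt (\<alpha>^2 + \<gamma>^2)"
proof -
  have "norm (lin2 \<alpha> \<beta> \<gamma> \<delta> (pt d 0)) = sqrt (d^2 * (\<alpha>^2 + \<gamma>^2))"
    by (simp add: lin2_def norm_pt power_mult_distrib algebra_simps)
  then show ?thesis by (simp add: real_sqrt_mult)
qed

lemma norm_lin2_v: "norm (lin2 \<alpha> \<beta> \<gamma> \<delta> (pt 0 d)) = \<bar>d\<bar> * sqrt (\<beta>^2 + \<delta>^2)"
proof -
  have "norm (lin2 \<alpha> \<beta> \<gamma> \<delta> (pt 0 d)) = sqrt (d^2 * (\<beta>^2 + \<delta>^2))"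
    by (simp add: lin2_def norm_pt power_mult_distrib algebra_simps)
  then show ?thesis by (simp add: real_sqrt_mult)
qed

lemma bil_from:
  fixes \<phi> :: "real \<Rightarrow> real"
  assumes L: "L \<ge> 1" and al: "\<alpha> > 0" and be: "\<beta> > 0" and p0: "\<phi> 0 = 0" and p1: "\<phi> 1 = 1"
    and H: "\<And>s t. 0 \<le> s \<Longrightarrow> s \<le> 1 \<Longrightarrow> 0 \<le> t \<Longrightarrow> t \<le> 1 \<Longrightarrow>
       \<alpha> * \<bar>s - t\<bar> / L \<le> \<beta> * \<bar>\<phi> s - \<phi> t\<bar> \<and> \<beta> * \<bar>\<phi> s - \<phi> t\<bar> \<le> L * \<alpha> * \<bar>s - t\<bar>"
  shows "bil (L^2) \<phi>"
proof -
  have Lp: "L > 0" using L by simp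
  have h01: "\<alpha> / L \<le> \<beta>" "\<beta> \<le> L * \<alpha>" using H[of 1 0] p0 p1 by auto
  have r1: "\<alpha> / \<beta> \<le> L" using h01(1) Lp be by (simp add: divide_le_eq mult.commute)
  have r2: "1 / L \<le> \<alpha> / \<beta>" using h01(2) Lp be by (simp add: divide_le_eq le_divide_eq mult.commute)
  have lip: "\<bar>\<phi> s - \<phi> t\<bar> \<le> (L * \<alpha> / \<beta>) * \<bar>s - t\<bar>" if "s \<in> {0..1}" "t \<in> {0..1}" for s t
    using H[of s t] that be by (simp add: le_divide_eq mult.commute mult.left_commute)
  have cont: "continuous_on {0..1} \<phi>"
  proof -
    have "lipschitz_on (L * \<alpha> / \<beta>) {0..1} \<phi>"
      using lip Lp al be by (intro lipschitz_onI) (auto simp: dist_real_def)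
    then show ?thesis by (rule lipschitz_on_continuous_on)
  qed
  have inj: "inj_on \<phi> {0..1}"
  proof (rule inj_onI)
    fix s t assume st: "s \<in> {0..1}" "t \<in> {0..1}" "\<phi> s = \<phi> t"
    then have "\<alpha> * \<bar>s - t\<bar> / L \<le> 0" using H[of s t] by auto
    then show "s = t" using al Lp by (simp add: divide_le_0_iff zero_le_mult_iff mult_le_0_iff)
  qed
  have mid: "0 < \<phi> x \<and> \<phi> x < 1" if "0 < x" "x < 1" for x
    using continuous_inj_imp_mono[OF that cont inj] p0 p1 by auto
  have mono: "\<phi> s < \<phi> t" if "0 \<le> s" "s < t" "t \<le> 1" for s t
  proof (cases "s = 0")
    case True then show ?thesis using mid[of t] p0 p1 that by (cases "t = 1") auto
  next
    case False
    then have s0: "0 < s" using that by simp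
    have "(\<phi> 0 < \<phi> s \<and> \<phi> s < \<phi> t) \<or> (\<phi> t < \<phi> s \<and> \<phi> s < \<phi> 0)"
      by (rule continuous_inj_imp_mono[OF s0 that(2)])
        (use cont inj that in \<open>auto intro: continuous_on_subset inj_on_subset\<close>)
    moreover have "0 < \<phi> s" using mid[of s] s0 that by auto
    ultimately show ?thesis using p0 by auto
  qed
  have b: "(t-s)/L^2 \<le> \<phi> t - \<phi> s \<and> \<phi> t - \<phi> s \<le> L^2*(t-s)" if "0 \<le> s" "s \<le> t" "t \<le> 1" for s t
  proof (cases "s = t")
    case True then show ?thesis by simp
  next
    case False
    then have lt: "s < t" using that by simp
    have ab: "\<bar>\<phi> t - \<phi> s\<bar> = \<phi> t - \<phi> s" using mono[OF that(1) lt that(3)] by simp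
    have H1: "\<alpha> * (t - s) / L \<le> \<beta> * (\<phi> t - \<phi> s)" "\<beta> * (\<phi> t - \<phi> s) \<le> L * \<alpha> * (t - s)"
      using H[of t s] that lt ab by auto
    have "(t-s)/L^2 = (1/L) * (t - s) / L" by (simp add: power2_eq_square)
    also have "\<dots> \<le> (\<alpha>/\<beta>) * (t - s) / L"
      using r2 lt Lp by (intro divide_right_mono mult_right_mono) auto
    also have "\<dots> = (\<alpha> * (t - s) / L) / \<beta>" by simp
    also have "\<dots> \<le> \<phi> t - \<phi> s" using H1(1) by (simp only: pos_divide_le_eq[OF be]) (simp add: mult.commute)
    finally have lo: "(t-s)/L^2 \<le> \<phi> t - \<phi> s" .
    have "\<phi> t - \<phi> s \<le> (L * \<alpha> * (t - s)) / \<beta>" using H1(2) be by (simp add: le_divide_eq mult.commute)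
    also have "\<dots> = L * (\<alpha>/\<beta>) * (t - s)" by simp
    also have "\<dots> \<le> L * L * (t - s)"
      using r1 lt Lp by (intro mult_right_mono mult_left_mono) auto
    finally show ?thesis using lo by (simp add: power2_eq_square)
  qed
  have "L^2 \<ge> 1" using L by (simp add: one_le_power)
  then show ?thesis unfolding bil_def using p0 p1 b by auto
qed


definition Cst :: "real \<Rightarrow> real \<Rightarrow> real" where
  "Cst L p = (100 * (L^2)^8) powr p * (L^2)^4"

lemma AE_interior_rect:
  assumes "\<And>x. x \<in> interior (rect 1 1) \<Longrightarrow> P x"
  shows "AE x in lebesgue_on (rect 1 1). P x"
proof -
  have S: "rect 1 1 = cbox (pt 0 0) (pt 1 1)" by (rule rect_cbox)
  have m: "rect 1 1 \<inter> space lebesgue \<in> sets lebesgue" unfolding S by simp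
  have N: "cbox (pt 0 0) (pt 1 1) - box (pt 0 0) (pt 1 1) \<in> null_sets lebesgue"
    using negligible_frontier_interval negligible_iff_null_sets by blast
  have "AE x in lebesgue. x \<in> rect 1 1 \<longrightarrow> P x"
  proof (rule AE_I'[OF N])
    show "{x \<in> space lebesgue. \<not> (x \<in> rect 1 1 \<longrightarrow> P x)} \<subseteq> cbox (pt 0 0) (pt 1 1) - box (pt 0 0) (pt 1 1)"
      using assms unfolding S interior_cbox by auto
  qed
  then show ?thesis by (simp add: AE_restrict_space_iff[OF m])
qed

lemma sumabs_prod:
  fixes \<alpha> \<beta> \<gamma> \<delta> p q r s :: real
  shows "\<bar>\<alpha>*p+\<beta>*r\<bar> + \<bar>\<alpha>*q+\<beta>* s\<bar> + \<bar>\<gamma>*p+\<delta>*r\<bar> + \<bar>\<gamma>*q+\<delta>* s\<bar> \<le>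
    (\<bar>\<alpha>\<bar>+\<bar>\<beta>\<bar>+\<bar>\<gamma>\<bar>+\<bar>\<delta>\<bar>) * (\<bar>p\<bar>+\<bar>q\<bar>+\<bar>r\<bar>+\<bar>s\<bar>)"
proof -
  have t: "\<bar>x*y+z*w\<bar> \<le> \<bar>x\<bar>*\<bar>y\<bar> + \<bar>z\<bar>*\<bar>w\<bar>" for x y z w :: real
    by (metis abs_mult abs_triangle_ineq)
  have n: "0 \<le> \<bar>x\<bar>*\<bar>y\<bar>" for x y :: real by simp
  have e: "(\<bar>\<alpha>\<bar>+\<bar>\<beta>\<bar>+\<bar>\<gamma>\<bar>+\<bar>\<delta>\<bar>) * (\<bar>p\<bar>+\<bar>q\<bar>+\<bar>r\<bar>+\<bar>s\<bar>) =
    (\<bar>\<alpha>\<bar>*\<bar>p\<bar> + \<bar>\<beta>\<bar>*\<bar>r\<bar>) + (\<bar>\<alpha>\<bar>*\<bar>q\<bar> + \<bar>\<beta>\<bar>*\<bar>s\<bar>) + (\<bar>\<gamma>\<bar>*\<bar>p\<bar> + \<bar>\<delta>\<bar>*\<bar>r\<bar>) + (\<bar>\<gamma>\<bar>*\<bar>q\<bar> + \<bar>\<delta>\<bar>*\<bar>s\<bar>)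
    + (\<bar>\<alpha>\<bar>*\<bar>r\<bar> + \<bar>\<alpha>\<bar>*\<bar>s\<bar> + \<bar>\<beta>\<bar>*\<bar>p\<bar> + \<bar>\<beta>\<bar>*\<bar>q\<bar> + \<bar>\<gamma>\<bar>*\<bar>r\<bar> + \<bar>\<gamma>\<bar>*\<bar>s\<bar> + \<bar>\<delta>\<bar>*\<bar>p\<bar> + \<bar>\<delta>\<bar>*\<bar>q\<bar>)"
    by (simp add: algebra_simps)
  show ?thesis unfolding e
    using t[of \<alpha> p \<beta> r] t[of \<alpha> q \<beta> s] t[of \<gamma> p \<delta> r] t[of \<gamma> q \<delta> s]
      n[of \<alpha> r] n[of \<alpha> s] n[of \<beta> p] n[of \<beta> q] n[of \<gamma> r] n[of \<gamma> s] n[of \<delta> p] n[of \<delta> q]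
    by linarith
qed

lemma norm_ap_h: "a \<ge> 1 \<Longrightarrow> norm_ap a p (pt s 0 - pt t 0) = a * \<bar>s - t\<bar>"
  by (simp add: norm_ap_def)
lemma norm_ap_h1: "a \<ge> 1 \<Longrightarrow> norm_ap a p (pt s 1 - pt t 1) = a * \<bar>s - t\<bar>"
  by (simp add: norm_ap_def)
lemma norm_ap_v: "a \<ge> 1 \<Longrightarrow> norm_ap a p (pt 0 s - pt 0 t) = a powr (p-1) * \<bar>s - t\<bar>"
  by (simp add: norm_ap_def)
lemma norm_ap_v1: "a \<ge> 1 \<Longrightarrow> norm_ap a p (pt 1 s - pt 1 t) = a powr (p-1) * \<bar>s - t\<bar>"
  by (simp add: norm_ap_def)


lemma rot_case:
  fixes a p L \<alpha> \<beta> \<gamma> \<delta> c1 c2 :: real and f :: "real^2 \<Rightarrow> real^2"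
  assumes a1: "a \<ge> 1" and p1: "1 < p" and p2: "p < 2" and L1: "L \<ge> 1"
  and bl: "\<forall>u\<in>frontier (rect 1 1). \<forall>v\<in>frontier (rect 1 1).
          norm_ap a p (u - v) / L \<le> dist (f u) (f v) \<and> dist (f u) (f v) \<le> L * norm_ap a p (u - v)"
  and edg: "\<And>i. i < 4 \<Longrightarrow> f ` ed 1 1 i = aff \<alpha> \<beta> \<gamma> \<delta> c1 c2 ` ed 1 1 i"
  and det: "\<alpha>*\<delta> - \<beta>*\<gamma> = a * a powr (p-1)"
  and sab: "\<bar>\<alpha>\<bar>+\<bar>\<beta>\<bar>+\<bar>\<gamma>\<bar>+\<bar>\<delta>\<bar> \<le> 2*a"
  and img: "aff \<alpha> \<beta> \<gamma> \<delta> c1 c2 ` rect 1 1 = rect a (a powr (p-1))"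
  shows "\<exists>F G. homeomorphism (rect 1 1) (rect a (a powr (p - 1))) F G
          \<and> (\<forall>x\<in>frontier (rect 1 1). F x = f x)
          \<and> (AE x in lebesgue_on (rect 1 1).
               \<exists>D. (F has_derivative D) (at x)
                   \<and> (onorm D) powr p \<le> Cst L p * det (matrix D))"
proof -
  define b where "b = a powr (p-1)"
  have bp: "b > 0" using a1 by (simp add: b_def)
  have ap: "a > 0" using a1 by simp
  define M where "M = aff \<alpha> \<beta> \<gamma> \<delta> c1 c2"
  define Mi where "Mi = affinv \<alpha> \<beta> \<gamma> \<delta> c1 c2"
  have Dp: "\<alpha>*\<delta> - \<beta>*\<gamma> > 0" using det ap bp by (simp add: b_def)
  have D0: "\<alpha>*\<delta> - \<beta>*\<gamma> \<noteq> 0" using Dp by simp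
  have MiM: "Mi (M z) = z" for z using affinv_aff[OF D0] by (simp add: M_def Mi_def)
  have MMi: "M (Mi w) = w" for w using aff_affinv[OF D0] by (simp add: M_def Mi_def)
  have inE: "Mi (f z) \<in> ed 1 1 i" if "i < 4" "z \<in> ed 1 1 i" for i z
  proof -
    have "f z \<in> M ` ed 1 1 i" using edg[OF that(1)] that(2) by (auto simp: M_def)
    then obtain y where "y \<in> ed 1 1 i" "f z = M y" by auto
    then show ?thesis using MiM by simp
  qed
  note E = ed0[of 1 1] ed1[of 1 1] ed1'[of 1 1] ed2[of 1 1] ed3[of 1 1]
  have fr: "z \<in> frontier (rect 1 1)" if "i < 4" "z \<in> ed 1 1 i" for i z
    using ed_sub[of 1 1 i] that by auto
  define \<phi>b where "\<phi>b s = Mi (f (pt s 0)) $ 1" for s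
  define \<phi>t where "\<phi>t s = Mi (f (pt s 1)) $ 1" for s
  define \<psi>l where "\<psi>l s = Mi (f (pt 0 s)) $ 2" for s
  define \<psi>r where "\<psi>r s = Mi (f (pt 1 s)) $ 2" for s
  have eb: "pt s 0 \<in> ed 1 1 0" "pt s 1 \<in> ed 1 1 2" "pt 0 s \<in> ed 1 1 3" "pt 1 s \<in> ed 1 1 1"
    if "0 \<le> s" "s \<le> 1" for s
    using that by (simp_all add: E)
  have Mb: "Mi (f (pt s 0)) = pt (\<phi>b s) 0" if "0 \<le> s" "s \<le> 1" for s
    using inE[OF _ eb(1)[OF that]] by (simp add: E vec2_eq_iff \<phi>b_def)
  have Mt: "Mi (f (pt s 1)) = pt (\<phi>t s) 1" if "0 \<le> s" "s \<le> 1" for s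
    using inE[OF _ eb(2)[OF that]] by (simp add: E vec2_eq_iff \<phi>t_def)
  have Ml: "Mi (f (pt 0 s)) = pt 0 (\<psi>l s)" if "0 \<le> s" "s \<le> 1" for s
    using inE[OF _ eb(3)[OF that]] by (simp add: E vec2_eq_iff \<psi>l_def)
  have Mr: "Mi (f (pt 1 s)) = pt 1 (\<psi>r s)" if "0 \<le> s" "s \<le> 1" for s
    using inE[OF _ eb(4)[OF that]] by (simp add: E vec2_eq_iff \<psi>r_def)
  have fb: "f (pt s 0) = M (pt (\<phi>b s) 0)" if "0 \<le> s" "s \<le> 1" for s
    using Mb[OF that] MMi by metis
  have ft: "f (pt s 1) = M (pt (\<phi>t s) 1)" if "0 \<le> s" "s \<le> 1" for s
    using Mt[OF that] MMi by metis
  have fl: "f (pt 0 s) = M (pt 0 (\<psi>l s))" if "0 \<le> s" "s \<le> 1" for s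
    using Ml[OF that] MMi by metis
  have fR: "f (pt 1 s) = M (pt 1 (\<psi>r s))" if "0 \<le> s" "s \<le> 1" for s
    using Mr[OF that] MMi by metis
  have ends: "\<phi>b 0 = 0" "\<phi>b 1 = 1" "\<phi>t 0 = 0" "\<phi>t 1 = 1" "\<psi>l 0 = 0" "\<psi>l 1 = 1" "\<psi>r 0 = 0" "\<psi>r 1 = 1"
  proof -
    have "Mi (f (pt 0 0)) \<in> ed 1 1 3" by (rule inE) (simp_all add: E)
    then show "\<phi>b 0 = 0" by (simp add: E \<phi>b_def)
    have "Mi (f (pt 1 0)) \<in> ed 1 1 1" by (rule inE) (simp_all add: E)
    then show "\<phi>b 1 = 1" by (simp add: E \<phi>b_def)
    have "Mi (f (pt 0 1)) \<in> ed 1 1 3" by (rule inE) (simp_all add: E)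
    then show "\<phi>t 0 = 0" by (simp add: E \<phi>t_def)
    have "Mi (f (pt 1 1)) \<in> ed 1 1 1" by (rule inE) (simp_all add: E)
    then show "\<phi>t 1 = 1" by (simp add: E \<phi>t_def)
    have "Mi (f (pt 0 0)) \<in> ed 1 1 0" by (rule inE) (simp_all add: E)
    then show "\<psi>l 0 = 0" by (simp add: E \<psi>l_def)
    have "Mi (f (pt 0 1)) \<in> ed 1 1 2" by (rule inE) (simp_all add: E)
    then show "\<psi>l 1 = 1" by (simp add: E \<psi>l_def)
    have "Mi (f (pt 1 0)) \<in> ed 1 1 0" by (rule inE) (simp_all add: E)
    then show "\<psi>r 0 = 0" by (simp add: E \<psi>r_def)
    have "Mi (f (pt 1 1)) \<in> ed 1 1 2" by (rule inE) (simp_all add: E)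
    then show "\<psi>r 1 = 1" by (simp add: E \<psi>r_def)
  qed
  have b1p: "sqrt (\<alpha>^2 + \<gamma>^2) > 0"
  proof -
    have "\<alpha> \<noteq> 0 \<or> \<gamma> \<noteq> 0" using D0 by auto
    then have "\<alpha>^2 + \<gamma>^2 > 0" by (auto simp: add_pos_nonneg add_nonneg_pos)
    then show ?thesis by simp
  qed
  have b2p: "sqrt (\<beta>^2 + \<delta>^2) > 0"
  proof -
    have "\<beta> \<noteq> 0 \<or> \<delta> \<noteq> 0" using D0 by auto
    then have "\<beta>^2 + \<delta>^2 > 0" by (auto simp: add_pos_nonneg add_nonneg_pos)
    then show ?thesis by simp
  qed
  have distM_h: "dist (M (pt x y)) (M (pt x' y)) = sqrt (\<alpha>^2 + \<gamma>^2) * \<bar>x - x'\<bar>" for x x' y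
    unfolding M_def aff_dist by (simp add: norm_lin2_h mult.commute)
  have distM_v: "dist (M (pt x y)) (M (pt x y')) = sqrt (\<beta>^2 + \<delta>^2) * \<bar>y - y'\<bar>" for x y y'
    unfolding M_def aff_dist by (simp add: norm_lin2_v mult.commute)
  have Bb: "bil (L^2) \<phi>b"
  proof (rule bil_from[OF L1 ap b1p ends(1,2)])
    fix s t :: real assume st: "0 \<le> s" "s \<le> 1" "0 \<le> t" "t \<le> 1"
    have u: "pt s 0 \<in> frontier (rect 1 1)" "pt t 0 \<in> frontier (rect 1 1)" using fr[OF _ eb(1)[OF st(1,2)]] fr[OF _ eb(1)[OF st(3,4)]] by simp_all
    have dd: "dist (f (pt s 0)) (f (pt t 0)) = sqrt (\<alpha>^2 + \<gamma>^2) * \<bar>\<phi>b s - \<phi>b t\<bar>"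
      using fb st distM_h by simp
    have h: "norm_ap a p (pt s 0 - pt t 0) / L \<le> dist (f (pt s 0)) (f (pt t 0)) \<and> dist (f (pt s 0)) (f (pt t 0)) \<le> L * norm_ap a p (pt s 0 - pt t 0)"
      using bl u by blast
    show "a * \<bar>s - t\<bar> / L \<le> sqrt (\<alpha>^2 + \<gamma>^2) * \<bar>\<phi>b s - \<phi>b t\<bar> \<and>
          sqrt (\<alpha>^2 + \<gamma>^2) * \<bar>\<phi>b s - \<phi>b t\<bar> \<le> L * a * \<bar>s - t\<bar>"
      using h unfolding norm_ap_h[OF a1] dd  by (simp only: mult.assoc)
  qed
  have Bt: "bil (L^2) \<phi>t"
  proof (rule bil_from[OF L1 ap b1p ends(3,4)])
    fix s t :: real assume st: "0 \<le> s" "s \<le> 1" "0 \<le> t" "t \<le> 1"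
    have u: "pt s 1 \<in> frontier (rect 1 1)" "pt t 1 \<in> frontier (rect 1 1)" using fr[OF _ eb(2)[OF st(1,2)]] fr[OF _ eb(2)[OF st(3,4)]] by simp_all
    have dd: "dist (f (pt s 1)) (f (pt t 1)) = sqrt (\<alpha>^2 + \<gamma>^2) * \<bar>\<phi>t s - \<phi>t t\<bar>"
      using ft st distM_h by simp
    have h: "norm_ap a p (pt s 1 - pt t 1) / L \<le> dist (f (pt s 1)) (f (pt t 1)) \<and> dist (f (pt s 1)) (f (pt t 1)) \<le> L * norm_ap a p (pt s 1 - pt t 1)"
      using bl u by blast
    show "a * \<bar>s - t\<bar> / L \<le> sqrt (\<alpha>^2 + \<gamma>^2) * \<bar>\<phi>t s - \<phi>t t\<bar> \<and>
          sqrt (\<alpha>^2 + \<gamma>^2) * \<bar>\<phi>t s - \<phi>t t\<bar> \<le> L * a * \<bar>s - t\<bar>"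
      using h unfolding norm_ap_h1[OF a1] dd  by (simp only: mult.assoc)
  qed
  have Bl: "bil (L^2) \<psi>l"
  proof (rule bil_from[OF L1 bp b2p ends(5,6)])
    fix s t :: real assume st: "0 \<le> s" "s \<le> 1" "0 \<le> t" "t \<le> 1"
    have u: "pt 0 s \<in> frontier (rect 1 1)" "pt 0 t \<in> frontier (rect 1 1)" using fr[OF _ eb(3)[OF st(1,2)]] fr[OF _ eb(3)[OF st(3,4)]] by simp_all
    have dd: "dist (f (pt 0 s)) (f (pt 0 t)) = sqrt (\<beta>^2 + \<delta>^2) * \<bar>\<psi>l s - \<psi>l t\<bar>"
      using fl st distM_v by simp
    have h: "norm_ap a p (pt 0 s - pt 0 t) / L \<le> dist (f (pt 0 s)) (f (pt 0 t)) \<and> dist (f (pt 0 s)) (f (pt 0 t)) \<le> L * norm_ap a p (pt 0 s - pt 0 t)"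
      using bl u by blast
    show "b * \<bar>s - t\<bar> / L \<le> sqrt (\<beta>^2 + \<delta>^2) * \<bar>\<psi>l s - \<psi>l t\<bar> \<and>
          sqrt (\<beta>^2 + \<delta>^2) * \<bar>\<psi>l s - \<psi>l t\<bar> \<le> L * b * \<bar>s - t\<bar>"
      using h unfolding norm_ap_v[OF a1] dd b_def[symmetric] by (simp only: mult.assoc)
  qed
  have Br: "bil (L^2) \<psi>r"
  proof (rule bil_from[OF L1 bp b2p ends(7,8)])
    fix s t :: real assume st: "0 \<le> s" "s \<le> 1" "0 \<le> t" "t \<le> 1"
    have u: "pt 1 s \<in> frontier (rect 1 1)" "pt 1 t \<in> frontier (rect 1 1)" using fr[OF _ eb(4)[OF st(1,2)]] fr[OF _ eb(4)[OF st(3,4)]] by simp_all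
    have dd: "dist (f (pt 1 s)) (f (pt 1 t)) = sqrt (\<beta>^2 + \<delta>^2) * \<bar>\<psi>r s - \<psi>r t\<bar>"
      using fR st distM_v by simp
    have h: "norm_ap a p (pt 1 s - pt 1 t) / L \<le> dist (f (pt 1 s)) (f (pt 1 t)) \<and> dist (f (pt 1 s)) (f (pt 1 t)) \<le> L * norm_ap a p (pt 1 s - pt 1 t)"
      using bl u by blast
    show "b * \<bar>s - t\<bar> / L \<le> sqrt (\<beta>^2 + \<delta>^2) * \<bar>\<psi>r s - \<psi>r t\<bar> \<and>
          sqrt (\<beta>^2 + \<delta>^2) * \<bar>\<psi>r s - \<psi>r t\<bar> \<le> L * b * \<bar>s - t\<bar>"
      using h unfolding norm_ap_v1[OF a1] dd b_def[symmetric] by (simp only: mult.assoc)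
  qed
  define K where "K = L^2"
  define G where "G = Gm \<phi>b \<phi>t \<psi>l \<psi>r"
  define F where "F = (\<lambda>z. M (G z))"
  note BB = Bb[folded K_def] Bt[folded K_def] Bl[folded K_def] Br[folded K_def]
  have K1: "K \<ge> 1" using L1 by (simp add: K_def one_le_power)
  have cG: "continuous_on (rect 1 1) G" unfolding G_def by (rule G_cont[OF BB])
  have imG: "G ` rect 1 1 = rect 1 1" unfolding G_def by (rule G_image[OF BB])
  have injG: "inj_on G (rect 1 1)" unfolding G_def by (rule G_inj[OF BB])
  have cF: "continuous_on (rect 1 1) F"
  proof -
    have "continuous_on (rect 1 1) (M \<circ> G)"
      by (rule continuous_on_compose[OF cG]) (simp add: M_def aff_cont)
    then show ?thesis by (simp add: F_def o_def)
  qed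
  have imF: "F ` rect 1 1 = rect a b"
  proof -
    have "F ` rect 1 1 = M ` (G ` rect 1 1)" by (simp add: F_def image_image)
    also have "\<dots> = rect a b" using img by (simp add: imG M_def b_def)
    finally show ?thesis .
  qed
  have injF: "inj_on F (rect 1 1)"
  proof -
    have "inj_on (M \<circ> G) (rect 1 1)"
      by (rule comp_inj_on[OF injG]) (simp add: M_def aff_inj[OF D0])
    then show ?thesis by (simp add: F_def o_def)
  qed
  have comp: "compact (rect 1 1)" by (simp add: rect_cbox compact_cbox)
  obtain G' where hom: "homeomorphism (rect 1 1) (rect a b) F G'"
    using homeomorphism_compact[OF comp cF imF injF] by blast
  have bd: "F x = f x" if x: "x \<in> frontier (rect 1 1)" for x
  proof -
    have "x \<in> ed 1 1 0 \<or> x \<in> ed 1 1 1 \<or> x \<in> ed 1 1 2 \<or> x \<in> ed 1 1 3"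
      using x frontier_ed[of 1 1] by auto
    then show ?thesis
    proof (elim disjE)
      assume "x \<in> ed 1 1 0"
      then have c: "x$2 = 0" "0 \<le> x$1" "x$1 \<le> 1" using E(1) by simp_all
      have "\<exists>s. x = pt s 0 \<and> 0 \<le> s \<and> s \<le> 1" using c by (intro exI[of _ "x$1"]) (simp add: vec2_eq_iff)
      then obtain s where s: "x = pt s 0" "0 \<le> s" "s \<le> 1" by blast
      show ?thesis using G_bot[OF BB s(2,3)] fb[OF s(2,3)] by (simp add: F_def G_def s(1))
    next
      assume "x \<in> ed 1 1 1"
      then have c: "x$1 = 1" "0 \<le> x$2" "x$2 \<le> 1" using E(2) by simp_all
      have "\<exists>s. x = pt 1 s \<and> 0 \<le> s \<and> s \<le> 1" using c by (intro exI[of _ "x$2"]) (simp add: vec2_eq_iff)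
      then obtain s where s: "x = pt 1 s" "0 \<le> s" "s \<le> 1" by blast
      show ?thesis using G_right[OF BB s(2,3)] fR[OF s(2,3)] by (simp add: F_def G_def s(1))
    next
      assume "x \<in> ed 1 1 2"
      then have c: "x$2 = 1" "0 \<le> x$1" "x$1 \<le> 1" using E(4) by simp_all
      have "\<exists>s. x = pt s 1 \<and> 0 \<le> s \<and> s \<le> 1" using c by (intro exI[of _ "x$1"]) (simp add: vec2_eq_iff)
      then obtain s where s: "x = pt s 1" "0 \<le> s" "s \<le> 1" by blast
      show ?thesis using G_top[OF BB s(2,3)] ft[OF s(2,3)] by (simp add: F_def G_def s(1))
    next
      assume "x \<in> ed 1 1 3"
      then have c: "x$1 = 0" "0 \<le> x$2" "x$2 \<le> 1" using E(5) by simp_all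
      have "\<exists>s. x = pt 0 s \<and> 0 \<le> s \<and> s \<le> 1" using c by (intro exI[of _ "x$2"]) (simp add: vec2_eq_iff)
      then obtain s where s: "x = pt 0 s" "0 \<le> s" "s \<le> 1" by blast
      show ?thesis using G_left[OF BB s(2,3)] fl[OF s(2,3)] by (simp add: F_def G_def s(1))
    qed
  qed
  have ab: "a * b = a powr p"
  proof -
    have "a * b = a powr 1 * a powr (p - 1)" using ap by (simp add: b_def)
    also have "\<dots> = a powr (1 + (p - 1))" by (rule powr_add[symmetric])
    also have "\<dots> = a powr p" by simp
    finally show ?thesis .
  qed
  have ae: "AE x in lebesgue_on (rect 1 1). \<exists>D. (F has_derivative D) (at x) \<and> (onorm D) powr p \<le> Cst L p * det (matrix D)"
  proof (rule AE_interior_rect)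
    fix x assume "x \<in> interior (rect 1 1)"
    then have xi: "0 < x$1" "x$1 < 1" "0 < x$2" "x$2 < 1" by (auto simp: interior_rect)
    obtain p' q' r' s' where Gd: "(G has_derivative lin2 p' q' r' s') (at x)"
      and sb: "\<bar>p'\<bar> + \<bar>q'\<bar> + \<bar>r'\<bar> + \<bar>s'\<bar> \<le> 50 * K^8" and db: "1/K^4 \<le> p' * s' - q' * r'"
      using G_deriv[OF BB xi] unfolding G_def by blast
    define P where "P = \<alpha> * p' + \<beta> * r'"
    define Q where "Q = \<alpha> * q' + \<beta> * s'"
    define R where "R = \<gamma> * p' + \<delta> * r'"
    define S where "S = \<gamma> * q' + \<delta> * s'"
    have Fd: "(F has_derivative lin2 P Q R S) (at x)"
    proof -
      have "((\<lambda>z. M (G z)) has_derivative (\<lambda>v. lin2 \<alpha> \<beta> \<gamma> \<delta> (lin2 p' q' r' s' v))) (at x)"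
        by (rule has_derivative_compose[OF Gd]) (simp add: M_def aff_deriv)
      then show ?thesis unfolding lin2_comp' F_def P_def Q_def R_def S_def .
    qed
    have on: "onorm (lin2 P Q R S) \<le> 100 * K^8 * a"
    proof -
      have "onorm (lin2 P Q R S) \<le> \<bar>P\<bar> + \<bar>Q\<bar> + \<bar>R\<bar> + \<bar>S\<bar>" by (rule onorm_lin2)
      also have "\<dots> \<le> (\<bar>\<alpha>\<bar>+\<bar>\<beta>\<bar>+\<bar>\<gamma>\<bar>+\<bar>\<delta>\<bar>) * (\<bar>p'\<bar>+\<bar>q'\<bar>+\<bar>r'\<bar>+\<bar>s'\<bar>)"
        unfolding P_def Q_def R_def S_def by (rule sumabs_prod)
      also have "\<dots> \<le> (2*a) * (50 * K^8)" by (rule mult_mono[OF sab sb]) (use ap in auto)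
      finally show ?thesis by (simp add: algebra_simps)
    qed
    have dt: "det (matrix (lin2 P Q R S)) = a * b * (p' * s' - q' * r')"
    proof -
      have "det (matrix (lin2 P Q R S)) = P * S - Q * R" by (rule det_lin2)
      also have "\<dots> = (\<alpha>*\<delta> - \<beta>*\<gamma>) * (p' * s' - q' * r')"
        by (simp add: P_def Q_def R_def S_def algebra_simps)
      finally show ?thesis using det by (simp add: b_def)
    qed
    have Kp: "K > 0" using K1 by simp
    have on0: "0 \<le> onorm (lin2 P Q R S)" by (rule onorm_pos_le[OF bl_lin2])
    have "(onorm (lin2 P Q R S)) powr p \<le> (100 * K^8 * a) powr p"
      by (rule powr_mono2) (use p1 on0 on in auto)
    also have "\<dots> = (100 * K^8) powr p * (a * b)" using ap Kp by (simp add: powr_mult ab)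
    also have "\<dots> = Cst L p * (a * b * (1/K^4))" using Kp by (simp add: Cst_def K_def)
    also have "\<dots> \<le> Cst L p * det (matrix (lin2 P Q R S))"
    proof (rule mult_left_mono)
      show "a * b * (1/K^4) \<le> det (matrix (lin2 P Q R S))" unfolding dt
        by (rule mult_left_mono[OF db]) (use ap bp in auto)
      show "0 \<le> Cst L p" by (simp add: Cst_def)
    qed
    finally show "\<exists>D. (F has_derivative D) (at x) \<and> (onorm D) powr p \<le> Cst L p * det (matrix D)"
      using Fd by blast
  qed
  show ?thesis using hom bd ae unfolding b_def by blast
qed


lemma toC_pt [simp]: "toC (pt x y) = Complex x y" by (simp add: toC_def)
lemma ofC_Complex [simp]: "ofC (Complex x y) = pt x y" by (simp add: ofC_def)
lemma toC_ofC [simp]: "toC (ofC z) = z" by (simp add: toC_def ofC_def)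
lemma ofC_toC [simp]: "ofC (toC z) = z" by (simp add: toC_def ofC_def vec2_eq_iff)

lemma linear_toC: "linear toC"
  by (rule linearI) (simp_all add: toC_def complex_eq_iff)
lemma linear_ofC: "linear ofC"
  by (rule linearI) (simp_all add: ofC_def vec2_eq_iff)
lemma cont_toC: "continuous_on A toC"
  by (rule linear_continuous_on) (rule linear_conv_bounded_linear[THEN iffD1, OF linear_toC])
lemma cont_ofC: "continuous_on A ofC"
  by (rule linear_continuous_on) (rule linear_conv_bounded_linear[THEN iffD1, OF linear_ofC])

lemma toC_seg: "toC ` closed_segment u v = closed_segment (toC u) (toC v)"
  by (rule closed_segment_linear_image[OF linear_toC, symmetric])
lemma ofC_seg: "ofC ` closed_segment u v = closed_segment (ofC u) (ofC v)"
  by (rule closed_segment_linear_image[OF linear_ofC, symmetric])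

lemma rect_loop_eq: "rect_loop w h = linepath 0 (Complex w 0) +++ linepath (Complex w 0) (Complex w h) +++
     linepath (Complex w h) (Complex 0 h) +++ linepath (Complex 0 h) 0"
  by (simp add: rect_loop_def)

lemma path_rect_loop: "path (rect_loop w h)" by (simp add: rect_loop_def)
lemma loop_rect_loop: "pathfinish (rect_loop w h) = pathstart (rect_loop w h)" by (simp add: rect_loop_def)

lemma path_image_rect_loop: "path_image (rect_loop w h) = closed_segment 0 (Complex w 0) \<union> closed_segment (Complex w 0) (Complex w h) \<union>
     closed_segment (Complex w h) (Complex 0 h) \<union> closed_segment (Complex 0 h) 0"
  by (simp add: rect_loop_def path_image_join Un_assoc)

lemma ofC_rect_loop: "ofC (rect_loop 1 1 t) \<in> ed 1 1 0 \<union> ed 1 1 1 \<union> ed 1 1 2 \<union> ed 1 1 3" if "t \<in> {0..1}"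
proof -
  have "rect_loop 1 1 t \<in> path_image (rect_loop 1 1)" using that by (simp add: path_image_def)
  then have "ofC (rect_loop 1 1 t) \<in> ofC ` path_image (rect_loop 1 1)" by blast
  also have "\<dots> = ed 1 1 0 \<union> ed 1 1 1 \<union> ed 1 1 2 \<union> ed 1 1 3"
    unfolding path_image_rect_loop image_Un ofC_seg by (simp add: ed_def ofC_def)
  finally show ?thesis .
qed

definition wl :: "complex \<Rightarrow> complex \<Rightarrow> complex \<Rightarrow> complex" where
  "wl u v z = winding_number (linepath u v) z"

lemma wrev: assumes "z \<notin> closed_segment u v" shows "wl u v z = - wl v u z"
proof -
  have "winding_number (reversepath (linepath v u)) z = - winding_number (linepath v u) z"
    by (rule winding_number_reversepath) (use assms in \<open>auto simp: closed_segment_commute\<close>)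
  then show ?thesis by (simp add: wl_def)
qed

lemma wind4:
  assumes "z \<notin> closed_segment q0 q1" "z \<notin> closed_segment q1 q2" "z \<notin> closed_segment q2 q3" "z \<notin> closed_segment q3 q0"
  shows "winding_number (linepath q0 q1 +++ linepath q1 q2 +++ linepath q2 q3 +++ linepath q3 q0) z =
    wl q0 q1 z + wl q1 q2 z + wl q2 q3 z + wl q3 q0 z"
proof -
  have a: "winding_number (linepath q2 q3 +++ linepath q3 q0) z = wl q2 q3 z + wl q3 q0 z"
    unfolding wl_def by (rule winding_number_join) (use assms in auto)
  have b0: "winding_number (linepath q1 q2 +++ (linepath q2 q3 +++ linepath q3 q0)) z =
      winding_number (linepath q1 q2) z + winding_number (linepath q2 q3 +++ linepath q3 q0) z"
    by (rule winding_number_join) (use assms in \<open>auto simp: path_image_join\<close>)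
  have c0: "winding_number (linepath q0 q1 +++ (linepath q1 q2 +++ (linepath q2 q3 +++ linepath q3 q0))) z =
      winding_number (linepath q0 q1) z + winding_number (linepath q1 q2 +++ (linepath q2 q3 +++ linepath q3 q0)) z"
    by (rule winding_number_join) (use assms in \<open>auto simp: path_image_join\<close>)
  have c: "winding_number (linepath q0 q1 +++ linepath q1 q2 +++ linepath q2 q3 +++ linepath q3 q0) z =
      wl q0 q1 z + (wl q1 q2 z + (wl q2 q3 z + wl q3 q0 z))"
    using c0 b0 a by (simp add: wl_def)
  then show ?thesis by (simp add: add.assoc)
qed

lemma rect_wind: assumes "a > 0" "b > 0"
  shows "wl 0 (Complex a 0) (Complex (a/2) (b/2)) + wl (Complex a 0) (Complex a b) (Complex (a/2) (b/2)) +
         wl (Complex a b) (Complex 0 b) (Complex (a/2) (b/2)) + wl (Complex 0 b) 0 (Complex (a/2) (b/2)) = 1"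
proof -
  let ?c = "Complex (a/2) (b/2)"
  have "winding_number (rectpath 0 (Complex a b)) ?c = 1"
    by (rule winding_number_rectpath) (use assms in \<open>simp add: in_box_complex_iff\<close>)
  moreover have "rectpath 0 (Complex a b) = linepath 0 (Complex a 0) +++ linepath (Complex a 0) (Complex a b) +++
     linepath (Complex a b) (Complex 0 b) +++ linepath (Complex 0 b) 0"
    by (simp add: rectpath_def Let_def)
  moreover have "?c \<notin> closed_segment 0 (Complex a 0)" "?c \<notin> closed_segment (Complex a 0) (Complex a b)"
     "?c \<notin> closed_segment (Complex a b) (Complex 0 b)" "?c \<notin> closed_segment (Complex 0 b) 0"
  proof -
    have io: "inj ofC" by (metis injI toC_ofC)
    have e: "?c \<in> closed_segment u v \<longleftrightarrow> pt (a/2) (b/2) \<in> closed_segment (ofC u) (ofC v)" for u v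
    proof -
      have "?c \<in> closed_segment u v \<longleftrightarrow> ofC ?c \<in> ofC ` closed_segment u v"
        by (rule inj_image_mem_iff[OF io, symmetric])
      then show ?thesis by (simp add: ofC_seg)
    qed
    have o: "ofC 0 = pt 0 0" by (simp add: ofC_def)
    show "?c \<notin> closed_segment 0 (Complex a 0)" "?c \<notin> closed_segment (Complex a 0) (Complex a b)"
     "?c \<notin> closed_segment (Complex a b) (Complex 0 b)" "?c \<notin> closed_segment (Complex 0 b) 0"
      unfolding e o ofC_Complex seg_h seg_v using assms by simp_all
  qed
  ultimately show ?thesis using wind4 by simp
qed


lemma comp_join: "h \<circ> (g1 +++ g2) = (h \<circ> g1) +++ (h \<circ> g2)"
  by (auto simp: joinpaths_def fun_eq_iff)

lemma aff_linepath: "(toC \<circ> aff \<alpha> \<beta> \<gamma> \<delta> c1 c2 \<circ> ofC) \<circ> linepath u v =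
   linepath (toC (aff \<alpha> \<beta> \<gamma> \<delta> c1 c2 (ofC u))) (toC (aff \<alpha> \<beta> \<gamma> \<delta> c1 c2 (ofC v)))"
  by (rule HOL.ext) (simp add: linepath_def aff_def lin2_def ofC_def toC_def complex_eq_iff algebra_simps scaleR_conv_of_real)

lemma aff_loop: "toC \<circ> aff \<alpha> \<beta> \<gamma> \<delta> c1 c2 \<circ> ofC \<circ> rect_loop 1 1 =
   linepath (toC (aff \<alpha> \<beta> \<gamma> \<delta> c1 c2 (pt 0 0))) (toC (aff \<alpha> \<beta> \<gamma> \<delta> c1 c2 (pt 1 0))) +++
   linepath (toC (aff \<alpha> \<beta> \<gamma> \<delta> c1 c2 (pt 1 0))) (toC (aff \<alpha> \<beta> \<gamma> \<delta> c1 c2 (pt 1 1))) +++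
   linepath (toC (aff \<alpha> \<beta> \<gamma> \<delta> c1 c2 (pt 1 1))) (toC (aff \<alpha> \<beta> \<gamma> \<delta> c1 c2 (pt 0 1))) +++
   linepath (toC (aff \<alpha> \<beta> \<gamma> \<delta> c1 c2 (pt 0 1))) (toC (aff \<alpha> \<beta> \<gamma> \<delta> c1 c2 (pt 0 0)))"
proof -
  have o: "ofC 0 = pt 0 0" by (simp add: ofC_def)
  show ?thesis unfolding rect_loop_eq comp_join aff_linepath o ofC_Complex by simp
qed

lemma hom_wind:
  fixes f M :: "real^2 \<Rightarrow> real^2" and a b :: real
  assumes ab: "a > 0" "b > 0"
    and cont: "continuous_on (frontier (rect 1 1)) f"
    and edg: "\<And>i. i < 4 \<Longrightarrow> f ` ed 1 1 i = M ` ed 1 1 i"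
    and Medg: "\<And>i. i < 4 \<Longrightarrow> M ` ed 1 1 i \<in> rect_edges a b"
    and Mc: "continuous_on UNIV M"
  shows "winding_number (toC \<circ> f \<circ> ofC \<circ> rect_loop 1 1) (Complex (a/2) (b/2)) =
         winding_number (toC \<circ> M \<circ> ofC \<circ> rect_loop 1 1) (Complex (a/2) (b/2))"
proof (rule winding_number_homotopic_loops, rule homotopic_loops_linear)
  let ?c = "Complex (a/2) (b/2)"
  have fr: "frontier (rect 1 1) = ed 1 1 0 \<union> ed 1 1 1 \<union> ed 1 1 2 \<union> ed 1 1 3" by (rule frontier_ed) auto
  have pimg: "ofC ` path_image (rect_loop 1 1) \<subseteq> frontier (rect 1 1)"
  proof
    fix y assume "y \<in> ofC ` path_image (rect_loop 1 1)"
    then obtain t where t: "t \<in> {0..1}" "y = ofC (rect_loop 1 1 t)" by (auto simp: path_image_def)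
    show "y \<in> frontier (rect 1 1)" unfolding fr t(2) by (rule ofC_rect_loop[OF t(1)])
  qed
  have c1: "continuous_on (path_image (rect_loop 1 1)) ((toC \<circ> f) \<circ> ofC)"
  proof (rule continuous_on_compose[OF cont_ofC])
    show "continuous_on (ofC ` path_image (rect_loop 1 1)) (toC \<circ> f)"
      by (rule continuous_on_compose[OF continuous_on_subset[OF cont pimg] cont_toC])
  qed
  show "path (toC \<circ> f \<circ> ofC \<circ> rect_loop 1 1)"
    by (rule path_continuous_image[OF path_rect_loop c1])
  have c2: "continuous_on (path_image (rect_loop 1 1)) ((toC \<circ> M) \<circ> ofC)"
  proof (rule continuous_on_compose[OF cont_ofC])
    show "continuous_on (ofC ` path_image (rect_loop 1 1)) (toC \<circ> M)"
      by (rule continuous_on_compose[OF continuous_on_subset[OF Mc] cont_toC]) simp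
  qed
  show "path (toC \<circ> M \<circ> ofC \<circ> rect_loop 1 1)"
    by (rule path_continuous_image[OF path_rect_loop c2])
  have l: "rect_loop 1 1 1 = rect_loop 1 1 0" using loop_rect_loop[of 1 1] by (simp add: pathstart_def pathfinish_def)
  show "pathfinish (toC \<circ> f \<circ> ofC \<circ> rect_loop 1 1) = pathstart (toC \<circ> f \<circ> ofC \<circ> rect_loop 1 1)"
    by (simp add: pathstart_def pathfinish_def l)
  show "pathfinish (toC \<circ> M \<circ> ofC \<circ> rect_loop 1 1) = pathstart (toC \<circ> M \<circ> ofC \<circ> rect_loop 1 1)"
    by (simp add: pathstart_def pathfinish_def l)
  fix t :: real assume t: "t \<in> {0..1}"
  define z where "z = ofC (rect_loop 1 1 t)"
  have zz: "z \<in> ed 1 1 0 \<or> z \<in> ed 1 1 1 \<or> z \<in> ed 1 1 2 \<or> z \<in> ed 1 1 3"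
    using ofC_rect_loop[OF t] unfolding z_def by blast
  have "\<exists>i<4. z \<in> ed 1 1 i"
  proof -
    from zz show ?thesis
    proof (elim disjE)
      assume "z \<in> ed 1 1 0" then show ?thesis by (intro exI[of _ 0]) simp
    next
      assume "z \<in> ed 1 1 1" then show ?thesis by (intro exI[of _ 1]) simp
    next
      assume "z \<in> ed 1 1 2" then show ?thesis by (intro exI[of _ 2]) simp
    next
      assume "z \<in> ed 1 1 3" then show ?thesis by (intro exI[of _ 3]) simp
    qed
  qed
  then obtain i where i: "i < 4" "z \<in> ed 1 1 i" by blast
  obtain j where j: "M ` ed 1 1 i = ed a b j" "j < 4"
  proof -
    have "M ` ed 1 1 i \<in> {ed a b 0, ed a b 1, ed a b 2, ed a b 3}" using Medg[OF i(1)] by (simp add: rect_edges_ed)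
    then show ?thesis using that by auto
  qed
  have fz: "f z \<in> ed a b j" using edg[OF i(1)] i(2) j(1) by blast
  have Mz: "M z \<in> ed a b j" using i(2) j(1) by blast
  have cv: "convex (ed a b j)" by (simp add: ed_def)
  have sub: "closed_segment (f z) (M z) \<subseteq> ed a b j" by (rule closed_segment_subset[OF fz Mz cv])
  have nc: "pt (a/2) (b/2) \<notin> ed a b j"
  proof -
    have "j = 0 \<or> j = 1 \<or> j = 2 \<or> j = 3" using j(2) by auto
    then show ?thesis using ab by (auto simp: ed0 ed1 ed1' ed2 ed3)
  qed
  have "closed_segment (toC (f z)) (toC (M z)) = toC ` closed_segment (f z) (M z)" by (simp add: toC_seg)
  also have "\<dots> \<subseteq> toC ` ed a b j" using sub by blast
  finally have ss: "closed_segment (toC (f z)) (toC (M z)) \<subseteq> toC ` ed a b j" .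
  have "?c \<notin> toC ` ed a b j"
  proof
    assume "?c \<in> toC ` ed a b j"
    then obtain y where y: "y \<in> ed a b j" "?c = toC y" by blast
    then have "ofC ?c = y" by simp
    then show False using nc y(1) by simp
  qed
  then have "closed_segment (toC (f z)) (toC (M z)) \<subseteq> - {?c}" using ss by blast
  then show "closed_segment ((toC \<circ> f \<circ> ofC \<circ> rect_loop 1 1) t) ((toC \<circ> M \<circ> ofC \<circ> rect_loop 1 1) t) \<subseteq> - {?c}"
    by (simp add: z_def)
qed


lemma C00: "Complex 0 0 = 0" by (simp add: complex_eq_iff)

lemma c_notin: assumes "a > 0" "b > 0"
  shows "Complex (a/2) (b/2) \<notin> closed_segment 0 (Complex a 0)"
    "Complex (a/2) (b/2) \<notin> closed_segment (Complex a 0) (Complex a b)"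
    "Complex (a/2) (b/2) \<notin> closed_segment (Complex a b) (Complex 0 b)"
    "Complex (a/2) (b/2) \<notin> closed_segment (Complex 0 b) 0"
proof -
  have io: "inj ofC" by (metis injI toC_ofC)
  have e: "Complex (a/2) (b/2) \<in> closed_segment u v \<longleftrightarrow> pt (a/2) (b/2) \<in> closed_segment (ofC u) (ofC v)" for u v
  proof -
    have "Complex (a/2) (b/2) \<in> closed_segment u v \<longleftrightarrow> ofC (Complex (a/2) (b/2)) \<in> ofC ` closed_segment u v"
      by (rule inj_image_mem_iff[OF io, symmetric])
    then show ?thesis by (simp add: ofC_seg)
  qed
  have o: "ofC 0 = pt 0 0" by (simp add: ofC_def)
  show "Complex (a/2) (b/2) \<notin> closed_segment 0 (Complex a 0)"
    "Complex (a/2) (b/2) \<notin> closed_segment (Complex a 0) (Complex a b)"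
    "Complex (a/2) (b/2) \<notin> closed_segment (Complex a b) (Complex 0 b)"
    "Complex (a/2) (b/2) \<notin> closed_segment (Complex 0 b) 0"
    unfolding e o ofC_Complex seg_h seg_v using assms by simp_all
qed

lemma refl_sum: assumes "a > 0" "b > 0"
  shows "wl (Complex a 0) 0 (Complex (a/2) (b/2)) + wl 0 (Complex 0 b) (Complex (a/2) (b/2)) +
         wl (Complex 0 b) (Complex a b) (Complex (a/2) (b/2)) + wl (Complex a b) (Complex a 0) (Complex (a/2) (b/2)) = -1"
proof -
  note n = c_notin[OF assms]
  have "wl (Complex a 0) 0 (Complex (a/2) (b/2)) = - wl 0 (Complex a 0) (Complex (a/2) (b/2))"
    by (rule wrev) (use n in \<open>simp add: closed_segment_commute\<close>)
  moreover have "wl 0 (Complex 0 b) (Complex (a/2) (b/2)) = - wl (Complex 0 b) 0 (Complex (a/2) (b/2))"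
    by (rule wrev) (use n in \<open>simp add: closed_segment_commute\<close>)
  moreover have "wl (Complex 0 b) (Complex a b) (Complex (a/2) (b/2)) = - wl (Complex a b) (Complex 0 b) (Complex (a/2) (b/2))"
    by (rule wrev) (use n in \<open>simp add: closed_segment_commute\<close>)
  moreover have "wl (Complex a b) (Complex a 0) (Complex (a/2) (b/2)) = - wl (Complex a 0) (Complex a b) (Complex (a/2) (b/2))"
    by (rule wrev) (use n in \<open>simp add: closed_segment_commute\<close>)
  ultimately show ?thesis using rect_wind[OF assms] by (simp add: algebra_simps)
qed

lemma refl_wind:
  assumes ab: "a > 0" "b > 0"
    and M: "M = aff (-a) 0 0 b a 0 \<or> M = aff 0 (-a) (-b) 0 a b \<or> M = aff a 0 0 (-b) 0 b \<or> M = aff 0 a b 0 0 0"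
  shows "winding_number (toC \<circ> M \<circ> ofC \<circ> rect_loop 1 1) (Complex (a/2) (b/2)) = -1"
proof -
  note n = c_notin[OF ab]
  have n': "Complex (a/2) (b/2) \<notin> closed_segment (Complex a 0) 0"
    "Complex (a/2) (b/2) \<notin> closed_segment (Complex a b) (Complex a 0)"
    "Complex (a/2) (b/2) \<notin> closed_segment (Complex 0 b) (Complex a b)"
    "Complex (a/2) (b/2) \<notin> closed_segment 0 (Complex 0 b)"
    using n by (simp_all add: closed_segment_commute)
  note rs = refl_sum[OF ab]
  from M show ?thesis
  proof (elim disjE)
    assume M: "M = aff (-a) 0 0 b a 0"
    show ?thesis unfolding M aff_loop using wind4[OF n'(1,4,3,2)] rs
      by (simp add: aff_pt C00 algebra_simps)
  next
    assume M: "M = aff 0 (-a) (-b) 0 a b"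
    show ?thesis unfolding M aff_loop using wind4[OF n'(2,1,4,3)] rs
      by (simp add: aff_pt C00 algebra_simps)
  next
    assume M: "M = aff a 0 0 (-b) 0 b"
    show ?thesis unfolding M aff_loop using wind4[OF n'(3,2,1,4)] rs
      by (simp add: aff_pt C00 algebra_simps)
  next
    assume M: "M = aff 0 a b 0 0 0"
    show ?thesis unfolding M aff_loop using wind4[OF n'(4,3,2,1)] rs
      by (simp add: aff_pt C00 algebra_simps)
  qed
qed


lemma frac01: "0 \<le> w \<Longrightarrow> w \<le> a \<Longrightarrow> 0 < (a::real) \<Longrightarrow> 0 \<le> w / a \<and> w / a \<le> 1"
  by (simp add: divide_le_eq_1_pos)

lemma aff_rect_img:
  assumes "\<And>z. z \<in> rect 1 1 \<Longrightarrow> M z \<in> rect a b" "\<And>w. w \<in> rect a b \<Longrightarrow> \<exists>z \<in> rect 1 1. M z = w"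
  shows "M ` rect 1 1 = rect a b"
  using assms by blast

lemma rot_imgs: assumes a: "a > 0" and b: "b > 0"
  shows "aff a 0 0 b 0 0 ` rect 1 1 = rect a b" "aff 0 (-a) b 0 a 0 ` rect 1 1 = rect a b"
        "aff (-a) 0 0 (-b) a b ` rect 1 1 = rect a b" "aff 0 a (-b) 0 0 b ` rect 1 1 = rect a b"
proof -
  have m: "0 \<le> x * c" "x * c \<le> c" if "0 \<le> x" "x \<le> 1" "0 < c" for x c :: real
    using that by (simp_all add: mult_le_cancel_right1)
  show "aff a 0 0 b 0 0 ` rect 1 1 = rect a b"
  proof (rule aff_rect_img)
    fix z assume "z \<in> rect 1 1" then show "aff a 0 0 b 0 0 z \<in> rect a b"
      using m a b by (auto simp: rect_iff aff_def lin2_def mult.commute)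
  next
    fix w assume w: "w \<in> rect a b"
    then have r: "0 \<le> w$1" "w$1 \<le> a" "0 \<le> w$2" "w$2 \<le> b" by (auto simp: rect_iff)
    show "\<exists>z \<in> rect 1 1. aff a 0 0 b 0 0 z = w"
      by (rule bexI[of _ "pt (w$1/a) (w$2/b)"])
         (use r a b frac01[of "w$1" a] frac01[of "w$2" b] in \<open>auto simp: rect_iff aff_pt vec2_eq_iff\<close>)
  qed
  show "aff 0 (-a) b 0 a 0 ` rect 1 1 = rect a b"
  proof (rule aff_rect_img)
    fix z assume "z \<in> rect 1 1" then show "aff 0 (-a) b 0 a 0 z \<in> rect a b"
      using m a b by (auto simp: rect_iff aff_def lin2_def mult.commute)
  next
    fix w assume w: "w \<in> rect a b"
    then have r: "0 \<le> w$1" "w$1 \<le> a" "0 \<le> w$2" "w$2 \<le> b" by (auto simp: rect_iff)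
    show "\<exists>z \<in> rect 1 1. aff 0 (-a) b 0 a 0 z = w"
      by (rule bexI[of _ "pt (w$2/b) (1 - w$1/a)"])
         (use r a b frac01[of "w$1" a] frac01[of "w$2" b] in \<open>auto simp: rect_iff aff_pt vec2_eq_iff algebra_simps\<close>)
  qed
  show "aff (-a) 0 0 (-b) a b ` rect 1 1 = rect a b"
  proof (rule aff_rect_img)
    fix z assume "z \<in> rect 1 1" then show "aff (-a) 0 0 (-b) a b z \<in> rect a b"
      using m a b by (auto simp: rect_iff aff_def lin2_def mult.commute)
  next
    fix w assume w: "w \<in> rect a b"
    then have r: "0 \<le> w$1" "w$1 \<le> a" "0 \<le> w$2" "w$2 \<le> b" by (auto simp: rect_iff)
    show "\<exists>z \<in> rect 1 1. aff (-a) 0 0 (-b) a b z = w"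
      by (rule bexI[of _ "pt (1 - w$1/a) (1 - w$2/b)"])
         (use r a b frac01[of "w$1" a] frac01[of "w$2" b] in \<open>auto simp: rect_iff aff_pt vec2_eq_iff algebra_simps\<close>)
  qed
  show "aff 0 a (-b) 0 0 b ` rect 1 1 = rect a b"
  proof (rule aff_rect_img)
    fix z assume "z \<in> rect 1 1" then show "aff 0 a (-b) 0 0 b z \<in> rect a b"
      using m a b by (auto simp: rect_iff aff_def lin2_def mult.commute)
  next
    fix w assume w: "w \<in> rect a b"
    then have r: "0 \<le> w$1" "w$1 \<le> a" "0 \<le> w$2" "w$2 \<le> b" by (auto simp: rect_iff)
    show "\<exists>z \<in> rect 1 1. aff 0 a (-b) 0 0 b z = w"
      by (rule bexI[of _ "pt (1 - w$2/b) (w$1/a)"])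
         (use r a b frac01[of "w$1" a] frac01[of "w$2" b] in \<open>auto simp: rect_iff aff_pt vec2_eq_iff algebra_simps\<close>)
  qed
qed

lemma Med: "aff \<alpha> \<beta> \<gamma> \<delta> c1 c2 ` ed 1 1 0 = closed_segment (pt c1 c2) (pt (\<alpha> + c1) (\<gamma> + c2))"
  "aff \<alpha> \<beta> \<gamma> \<delta> c1 c2 ` ed 1 1 1 = closed_segment (pt (\<alpha> + c1) (\<gamma> + c2)) (pt (\<alpha> + \<beta> + c1) (\<gamma> + \<delta> + c2))"
  "aff \<alpha> \<beta> \<gamma> \<delta> c1 c2 ` ed 1 1 2 = closed_segment (pt (\<alpha> + \<beta> + c1) (\<gamma> + \<delta> + c2)) (pt (\<beta> + c1) (\<delta> + c2))"
  "aff \<alpha> \<beta> \<gamma> \<delta> c1 c2 ` ed 1 1 3 = closed_segment (pt (\<beta> + c1) (\<delta> + c2)) (pt c1 c2)"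
  by (simp_all add: ed_def aff_seg aff_pt)

lemma edab: "ed a b 0 = closed_segment (pt 0 0) (pt a 0)" "ed a b 1 = closed_segment (pt a 0) (pt a b)"
  "ed a b 2 = closed_segment (pt a b) (pt 0 b)" "ed a b 3 = closed_segment (pt 0 b) (pt 0 0)"
  by (simp_all add: ed_def)

lemma less4: "(i::nat) < 4 \<Longrightarrow> i = 0 \<or> i = 1 \<or> i = 2 \<or> i = 3" by auto


lemma seg_eq: "u = u' \<Longrightarrow> v = v' \<Longrightarrow> closed_segment u v = closed_segment u' v'" by simp
lemma seg_eq': "u = v' \<Longrightarrow> v = u' \<Longrightarrow> closed_segment u v = closed_segment u' v'" by (simp add: closed_segment_commute)

lemma tbl:
  shows "aff a 0 0 b 0 0 ` ed 1 1 0 = ed a b 0"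
    "aff a 0 0 b 0 0 ` ed 1 1 1 = ed a b 1"
    "aff a 0 0 b 0 0 ` ed 1 1 2 = ed a b 2"
    "aff a 0 0 b 0 0 ` ed 1 1 3 = ed a b 3"
    "aff 0 (-a) b 0 a 0 ` ed 1 1 0 = ed a b 1"
    "aff 0 (-a) b 0 a 0 ` ed 1 1 1 = ed a b 2"
    "aff 0 (-a) b 0 a 0 ` ed 1 1 2 = ed a b 3"
    "aff 0 (-a) b 0 a 0 ` ed 1 1 3 = ed a b 0"
    "aff (-a) 0 0 (-b) a b ` ed 1 1 0 = ed a b 2"
    "aff (-a) 0 0 (-b) a b ` ed 1 1 1 = ed a b 3"
    "aff (-a) 0 0 (-b) a b ` ed 1 1 2 = ed a b 0"
    "aff (-a) 0 0 (-b) a b ` ed 1 1 3 = ed a b 1"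
    "aff 0 a (-b) 0 0 b ` ed 1 1 0 = ed a b 3"
    "aff 0 a (-b) 0 0 b ` ed 1 1 1 = ed a b 0"
    "aff 0 a (-b) 0 0 b ` ed 1 1 2 = ed a b 1"
    "aff 0 a (-b) 0 0 b ` ed 1 1 3 = ed a b 2"
    "aff (-a) 0 0 b a 0 ` ed 1 1 0 = ed a b 0"
    "aff (-a) 0 0 b a 0 ` ed 1 1 1 = ed a b 3"
    "aff (-a) 0 0 b a 0 ` ed 1 1 2 = ed a b 2"
    "aff (-a) 0 0 b a 0 ` ed 1 1 3 = ed a b 1"
    "aff 0 (-a) (-b) 0 a b ` ed 1 1 0 = ed a b 1"
    "aff 0 (-a) (-b) 0 a b ` ed 1 1 1 = ed a b 0"
    "aff 0 (-a) (-b) 0 a b ` ed 1 1 2 = ed a b 3"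
    "aff 0 (-a) (-b) 0 a b ` ed 1 1 3 = ed a b 2"
    "aff a 0 0 (-b) 0 b ` ed 1 1 0 = ed a b 2"
    "aff a 0 0 (-b) 0 b ` ed 1 1 1 = ed a b 1"
    "aff a 0 0 (-b) 0 b ` ed 1 1 2 = ed a b 0"
    "aff a 0 0 (-b) 0 b ` ed 1 1 3 = ed a b 3"
    "aff 0 a b 0 0 0 ` ed 1 1 0 = ed a b 3"
    "aff 0 a b 0 0 0 ` ed 1 1 1 = ed a b 2"
    "aff 0 a b 0 0 0 ` ed 1 1 2 = ed a b 1"
    "aff 0 a b 0 0 0 ` ed 1 1 3 = ed a b 0"
  unfolding Med edab[of a b] by ((rule seg_eq, simp, simp) | (rule seg_eq', simp, simp))+

theorem lemma10p1:
  fixes L p :: real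
  assumes "L \<ge> 1" and "1 < p" and "p < 2"
  shows "\<exists>C::real. \<forall>(a::real) (f::real^2 \<Rightarrow> real^2).
    a \<ge> 1
    \<and> (\<exists>g. homeomorphism (frontier (rect 1 1)) (frontier (rect a (a powr (p - 1)))) f g)
    \<and> bdry_orientation_preserving f 1 1 a (a powr (p - 1))
    \<and> (\<forall>u\<in>frontier (rect 1 1). \<forall>v\<in>frontier (rect 1 1).
          norm_ap a p (u - v) / L \<le> dist (f u) (f v)
          \<and> dist (f u) (f v) \<le> L * norm_ap a p (u - v))
    \<and> (\<forall>E\<in>rect_edges 1 1. f ` E \<in> rect_edges a (a powr (p - 1)))
    \<longrightarrow> (\<exists>F G. homeomorphism (rect 1 1) (rect a (a powr (p - 1))) F G
          \<and> (\<forall>x\<in>frontier (rect 1 1). F x = f x)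
          \<and> (AE x in lebesgue_on (rect 1 1).
               \<exists>D. (F has_derivative D) (at x)
                   \<and> (onorm D) powr p \<le> C * det (matrix D)))"
proof (rule exI[of _ "Cst L p"], intro allI impI)
  fix a :: real and f :: "real^2 \<Rightarrow> real^2"
  assume H: "a \<ge> 1
    \<and> (\<exists>g. homeomorphism (frontier (rect 1 1)) (frontier (rect a (a powr (p - 1)))) f g)
    \<and> bdry_orientation_preserving f 1 1 a (a powr (p - 1))
    \<and> (\<forall>u\<in>frontier (rect 1 1). \<forall>v\<in>frontier (rect 1 1).
          norm_ap a p (u - v) / L \<le> dist (f u) (f v)
          \<and> dist (f u) (f v) \<le> L * norm_ap a p (u - v))
    \<and> (\<forall>E\<in>rect_edges 1 1. f ` E \<in> rect_edges a (a powr (p - 1)))"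
  have L1: "L \<ge> 1" and p1: "1 < p" and p2: "p < 2" using assms by auto
  have a1: "a \<ge> 1" using H by blast
  obtain g where hg: "homeomorphism (frontier (rect 1 1)) (frontier (rect a (a powr (p - 1)))) f g" using H by blast
  have ori: "bdry_orientation_preserving f 1 1 a (a powr (p - 1))" using H by blast
  have bl: "\<forall>u\<in>frontier (rect 1 1). \<forall>v\<in>frontier (rect 1 1).
          norm_ap a p (u - v) / L \<le> dist (f u) (f v) \<and> dist (f u) (f v) \<le> L * norm_ap a p (u - v)"
    using H by blast
  have edh: "\<forall>E\<in>rect_edges 1 1. f ` E \<in> rect_edges a (a powr (p - 1))" using H by blast
  define b where "b = a powr (p - 1)"
  have ap: "a > 0" using a1 by simp
  have bp: "b > 0" using ap by (simp add: b_def)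
  have ba: "b \<le> a"
  proof -
    have "a powr (p - 1) \<le> a powr 1" by (rule powr_mono) (use p2 a1 in auto)
    then show ?thesis using ap by (simp add: b_def)
  qed
  have cont: "continuous_on (frontier (rect 1 1)) f" using hg by (simp add: homeomorphism_def)
  have inj: "inj_on f (frontier (rect 1 1))" using hg by (metis homeomorphism_def inj_on_inverseI)
  define X where "X i = f ` ed 1 1 i" for i
  have sub: "ed 1 1 i \<subseteq> frontier (rect 1 1)" if "i < 4" for i by (rule ed_sub) (use that in auto)
  have Xin: "X i \<in> {ed a b 0, ed a b 1, ed a b 2, ed a b 3}" if "i < 4" for i
  proof -
    have "ed 1 1 i \<in> rect_edges 1 1" using less4[OF that] by (auto simp: rect_edges_ed)
    then have "X i \<in> rect_edges a b" using edh by (simp add: X_def b_def)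
    then show ?thesis by (simp add: rect_edges_ed)
  qed
  have Xne: "X i \<noteq> X j" if "i < 4" "j < 4" "ed 1 1 i \<noteq> ed 1 1 j" for i j
  proof
    assume "X i = X j"
    then have "ed 1 1 i = ed 1 1 j" unfolding X_def using inj_on_image_eq_iff[OF inj sub[OF that(1)] sub[OF that(2)]] by blast
    then show False using that(3) by simp
  qed
  note ed11 = ed_distinct[of 1 1, simplified]
  note edAB = ed_distinct[OF ap bp]
  have cor: "f (pt 1 0) \<in> X 0 \<inter> X 1" "f (pt 1 1) \<in> X 1 \<inter> X 2" "f (pt 0 1) \<in> X 2 \<inter> X 3" "f (pt 0 0) \<in> X 3 \<inter> X 0"
    using ed_corner[of 1 1] unfolding X_def by auto
  have cases: "(X 0 = ed a b 0 \<and> X 1 = ed a b 1 \<and> X 2 = ed a b 2 \<and> X 3 = ed a b 3) \<or>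
         (X 0 = ed a b 1 \<and> X 1 = ed a b 2 \<and> X 2 = ed a b 3 \<and> X 3 = ed a b 0) \<or>
         (X 0 = ed a b 2 \<and> X 1 = ed a b 3 \<and> X 2 = ed a b 0 \<and> X 3 = ed a b 1) \<or>
         (X 0 = ed a b 3 \<and> X 1 = ed a b 0 \<and> X 2 = ed a b 1 \<and> X 3 = ed a b 2) \<or>
         (X 0 = ed a b 0 \<and> X 1 = ed a b 3 \<and> X 2 = ed a b 2 \<and> X 3 = ed a b 1) \<or>
         (X 0 = ed a b 1 \<and> X 1 = ed a b 0 \<and> X 2 = ed a b 3 \<and> X 3 = ed a b 2) \<or>
         (X 0 = ed a b 2 \<and> X 1 = ed a b 1 \<and> X 2 = ed a b 0 \<and> X 3 = ed a b 3) \<or>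
         (X 0 = ed a b 3 \<and> X 1 = ed a b 2 \<and> X 2 = ed a b 1 \<and> X 3 = ed a b 0)"
    by (rule D4_cases[OF Xin[of 0] Xin[of 1] Xin[of 2] Xin[of 3] edAB
          Xne[of 0 1] Xne[of 0 2] Xne[of 0 3] Xne[of 1 2] Xne[of 1 3] Xne[of 2 3] ed_disj[OF ap bp]])
       (use ed11 cor in auto)
  have Xe: "f ` ed 1 1 i = X i" for i by (simp add: X_def)
  have rot: "\<exists>F G. homeomorphism (rect 1 1) (rect a (a powr (p - 1))) F G
          \<and> (\<forall>x\<in>frontier (rect 1 1). F x = f x)
          \<and> (AE x in lebesgue_on (rect 1 1).
               \<exists>D. (F has_derivative D) (at x) \<and> (onorm D) powr p \<le> Cst L p * det (matrix D))"
    if M: "X 0 = M ` ed 1 1 0" "X 1 = M ` ed 1 1 1" "X 2 = M ` ed 1 1 2" "X 3 = M ` ed 1 1 3"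
      and Mdef: "M = aff \<alpha> \<beta> \<gamma> \<delta> c1 c2"
      and det: "\<alpha>*\<delta> - \<beta>*\<gamma> = a * a powr (p-1)"
      and sab: "\<bar>\<alpha>\<bar>+\<bar>\<beta>\<bar>+\<bar>\<gamma>\<bar>+\<bar>\<delta>\<bar> \<le> 2*a"
      and img: "aff \<alpha> \<beta> \<gamma> \<delta> c1 c2 ` rect 1 1 = rect a (a powr (p-1))"
    for M \<alpha> \<beta> \<gamma> \<delta> c1 c2
  proof (rule rot_case[OF a1 p1 p2 L1 bl _ det sab img])
    fix i :: nat assume "i < 4"
    then show "f ` ed 1 1 i = aff \<alpha> \<beta> \<gamma> \<delta> c1 c2 ` ed 1 1 i"
      using less4 M Xe unfolding Mdef by metis
  qed
  have refl: "False"
    if M: "X 0 = M ` ed 1 1 0" "X 1 = M ` ed 1 1 1" "X 2 = M ` ed 1 1 2" "X 3 = M ` ed 1 1 3"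
      and Mdef: "M = aff (-a) 0 0 b a 0 \<or> M = aff 0 (-a) (-b) 0 a b \<or> M = aff a 0 0 (-b) 0 b \<or> M = aff 0 a b 0 0 0"
    for M
  proof -
    have edg: "f ` ed 1 1 i = M ` ed 1 1 i" if "i < 4" for i
      using less4[OF that] M Xe by metis
    have Medg: "M ` ed 1 1 i \<in> rect_edges a b" if "i < 4" for i
      using Xin[OF that] edg[OF that] by (simp add: Xe rect_edges_ed)
    have Mc: "continuous_on UNIV M" using Mdef by (auto simp: aff_cont)
    have "winding_number (toC \<circ> f \<circ> ofC \<circ> rect_loop 1 1) (Complex (a/2) (b/2)) =
         winding_number (toC \<circ> M \<circ> ofC \<circ> rect_loop 1 1) (Complex (a/2) (b/2))"
      by (rule hom_wind[OF ap bp cont edg Medg Mc])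
    also have "\<dots> = -1" by (rule refl_wind[OF ap bp Mdef])
    finally have "winding_number (toC \<circ> f \<circ> ofC \<circ> rect_loop 1 1) (Complex (a/2) (b/2)) = -1" .
    moreover have "winding_number (toC \<circ> f \<circ> ofC \<circ> rect_loop 1 1) (Complex (a/2) (b/2)) = 1"
      using ori by (simp add: bdry_orientation_preserving_def b_def)
    ultimately show False by simp
  qed
  have sab1: "\<bar>a\<bar> + \<bar>0\<bar> + \<bar>0\<bar> + \<bar>b\<bar> \<le> 2*a" "\<bar>0\<bar> + \<bar>-a\<bar> + \<bar>b\<bar> + \<bar>0\<bar> \<le> 2*a"
     "\<bar>-a\<bar> + \<bar>0\<bar> + \<bar>0\<bar> + \<bar>-b\<bar> \<le> 2*a" "\<bar>0\<bar> + \<bar>a\<bar> + \<bar>-b\<bar> + \<bar>0\<bar> \<le> 2*a"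
    using ap bp ba by simp_all
  note imgs = rot_imgs[OF ap bp, unfolded b_def]
  have sabs: "\<bar>a\<bar> + a powr (p - 1) \<le> 2 * a" "\<bar>a\<bar> + \<bar>a powr (p - 1)\<bar> \<le> 2 * a" "a + a powr (p - 1) \<le> 2 * a"
    using ap ba by (simp_all add: b_def)
  note ME = Med edab
  from cases show "\<exists>F G. homeomorphism (rect 1 1) (rect a (a powr (p - 1))) F G
          \<and> (\<forall>x\<in>frontier (rect 1 1). F x = f x)
          \<and> (AE x in lebesgue_on (rect 1 1).
               \<exists>D. (F has_derivative D) (at x) \<and> (onorm D) powr p \<le> Cst L p * det (matrix D))"
  proof (elim disjE conjE)
    assume c: "X 0 = ed a b 0" "X 1 = ed a b 1" "X 2 = ed a b 2" "X 3 = ed a b 3"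
    show ?thesis
      by (rule rot[of "aff a 0 0 b 0 0" a 0 0 b 0 0])
         (simp_all add: c tbl b_def imgs sabs del: One_nat_def)
  next
    assume c: "X 0 = ed a b 1" "X 1 = ed a b 2" "X 2 = ed a b 3" "X 3 = ed a b 0"
    show ?thesis
      by (rule rot[of "aff 0 (-a) b 0 a 0" 0 "-a" b 0 a 0])
         (simp_all add: c tbl b_def imgs sabs del: One_nat_def)
  next
    assume c: "X 0 = ed a b 2" "X 1 = ed a b 3" "X 2 = ed a b 0" "X 3 = ed a b 1"
    show ?thesis
      by (rule rot[of "aff (-a) 0 0 (-b) a b" "-a" 0 0 "-b" a b])
         (simp_all add: c tbl b_def imgs sabs del: One_nat_def)
  next
    assume c: "X 0 = ed a b 3" "X 1 = ed a b 0" "X 2 = ed a b 1" "X 3 = ed a b 2"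
    show ?thesis
      by (rule rot[of "aff 0 a (-b) 0 0 b" 0 a "-b" 0 0 b])
         (simp_all add: c tbl b_def imgs sabs del: One_nat_def)
  next
    assume c: "X 0 = ed a b 0" "X 1 = ed a b 3" "X 2 = ed a b 2" "X 3 = ed a b 1"
    have False by (rule refl[of "aff (-a) 0 0 b a 0"]) (simp_all add: c tbl del: One_nat_def)
    then show ?thesis ..
  next
    assume c: "X 0 = ed a b 1" "X 1 = ed a b 0" "X 2 = ed a b 3" "X 3 = ed a b 2"
    have False by (rule refl[of "aff 0 (-a) (-b) 0 a b"]) (simp_all add: c tbl del: One_nat_def)
    then show ?thesis ..
  next
    assume c: "X 0 = ed a b 2" "X 1 = ed a b 1" "X 2 = ed a b 0" "X 3 = ed a b 3"
    have False by (rule refl[of "aff a 0 0 (-b) 0 b"]) (simp_all add: c tbl del: One_nat_def)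
    then show ?thesis ..
  next
    assume c: "X 0 = ed a b 3" "X 1 = ed a b 2" "X 2 = ed a b 1" "X 3 = ed a b 0"
    have False by (rule refl[of "aff 0 a b 0 0 0"]) (simp_all add: c tbl del: One_nat_def)
    then show ?thesis ..
  qed
qed


end
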